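(* Let $M\ge 1$ be a fixed integer, $\beta>0$, $\lambda,h\in\mathbb{R}$, and assume either $\beta\le 1$, or $\beta>1$ and $\lambda\neq 0$, $h\neq 0$. Then for every $\boldsymbol{\epsilon}\in\{-1,1\}^M$ the limit $$-\beta f(\beta,M;\lambda,h\boldsymbol{\epsilon}) := \lim_{N\to\infty}\frac1N\,\mathbb{E}_{\mathcal{S}\sim P^{CW}_{\beta,h\boldsymbol{\epsilon}}}\big[\log Z(\mathcal{S};\beta,\lambda,M)\big]$$ exists, does not depend on $\boldsymbol{\epsilon}$, and equals $$\sup_{\mathbf{p}\in\mathbb{R}^M} g(\mathbf{p};\beta,\lambda,h),\qquad g(\mathbf{p};\beta,\lambda,h)=\log 2-\frac{\beta|\mathbf{p}|^2}{2}+\big\langle \log\cosh(\beta\,\mathbf{s}\cdot\mathbf{p}+\lambda)\big\rangle_{\mathbf{s}},$$ where $\langle\cdot\rangle_{\mathbf{s}}$ is the expectation over a random vector $\mathbf{s}\in\{-1,1\}^M$ with i.i.d. entries of mean $m_0(\beta,h)$.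
   Context: For $N\ge 2$, a training set is $\mathcal{S}=(\mathbf{s}^1,\dots,\mathbf{s}^M)$ with $\mathbf{s}^\mu=(s^\mu_1,\dots,s^\mu_N)\in\{-1,1\}^N$. For $\mathbf{h}=(h^1,\dots,h^M)\in\mathbb{R}^M$, the Curie–Weiss product measure is $$P^{CW}_{\beta,\mathbf{h}}(\mathcal{S})=\prod_{\mu=1}^M z_{\beta,h^\mu}^{-1}\exp\Big(\frac{\beta}{N}\sum_{i<j}s^\mu_is^\mu_j+h^\mu\sum_{i=1}^N s^\mu_i\Big),$$ with $z_{\beta,h^\mu}$ the normalizing constants. The partition function is $$Z(\mathcal{S};\beta,\lambda,M)=\sum_{\boldsymbol{\xi}\in\{-1,1\}^N}\exp\Big(\frac{\beta}{N}\sum_{\mu=1}^M\sum_{i<j}s^\mu_is^\mu_j\xi_i\xi_j+\lambda\sum_{i=1}^N\xi_i\Big).$$ For $\beta>0$, $h\in\mathbb{R}$, $m_0(\beta,h):=\operatorname{argmax}_{x\in\mathbb{R}}\big[\log 2+\log\cosh(\beta x+h)-\beta x^2/2\big]$ (unique when $h\neq0$ or $\beta\le1$); it solves $m_0=\tanh(\beta m_0+h)$. *)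

theory Defs
  imports "HOL-Analysis.Analysis"
begin

definition spins :: "nat \<Rightarrow> (nat \<Rightarrow> real) set" where
  "spins N = ({..<N} \<rightarrow>\<^sub>E {-1, 1})"

text \<open>Training sets S = (s^1,...,s^M): S mu i = s^mu_i for mu < M, i < N.\<close>
definition training_sets :: "nat \<Rightarrow> nat \<Rightarrow> (nat \<Rightarrow> nat \<Rightarrow> real) set" where
  "training_sets M N = ({..<M} \<rightarrow>\<^sub>E spins N)"

definition cw_weight :: "real \<Rightarrow> real \<Rightarrow> nat \<Rightarrow> (nat \<Rightarrow> real) \<Rightarrow> real" where
  "cw_weight \<beta> h N s =
     exp (\<beta> / real N * (\<Sum>j<N. \<Sum>i<j. s i * s j) + h * (\<Sum>i<N. s i))"

definition cw_z :: "real \<Rightarrow> real \<Rightarrow> nat \<Rightarrow> real" where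
  "cw_z \<beta> h N = (\<Sum>s\<in>spins N. cw_weight \<beta> h N s)"

definition P_CW :: "real \<Rightarrow> (nat \<Rightarrow> real) \<Rightarrow> nat \<Rightarrow> nat \<Rightarrow> (nat \<Rightarrow> nat \<Rightarrow> real) \<Rightarrow> real" where
  "P_CW \<beta> h M N S = (\<Prod>\<mu><M. cw_weight \<beta> (h \<mu>) N (S \<mu>) / cw_z \<beta> (h \<mu>) N)"

definition Zpart :: "nat \<Rightarrow> (nat \<Rightarrow> nat \<Rightarrow> real) \<Rightarrow> real \<Rightarrow> real \<Rightarrow> nat \<Rightarrow> real" where
  "Zpart N S \<beta> lam M =
     (\<Sum>\<xi>\<in>spins N. exp (\<beta> / real N * (\<Sum>\<mu><M. \<Sum>j<N. \<Sum>i<j. S \<mu> i * S \<mu> j * \<xi> i * \<xi> j)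
                         + lam * (\<Sum>i<N. \<xi> i)))"

definition expected_logZ :: "real \<Rightarrow> real \<Rightarrow> (nat \<Rightarrow> real) \<Rightarrow> nat \<Rightarrow> nat \<Rightarrow> real" where
  "expected_logZ \<beta> lam h M N =
     (\<Sum>S\<in>training_sets M N. P_CW \<beta> h M N S * ln (Zpart N S \<beta> lam M))"

definition m0_obj :: "real \<Rightarrow> real \<Rightarrow> real \<Rightarrow> real" where
  "m0_obj \<beta> h x = ln 2 + ln (cosh (\<beta> * x + h)) - \<beta> * x\<^sup>2 / 2"

definition m0 :: "real \<Rightarrow> real \<Rightarrow> real" where
  "m0 \<beta> h = (THE x. \<forall>y. m0_obj \<beta> h y \<le> m0_obj \<beta> h x)"

text \<open>Law of s in {-1,1}^M with i.i.d. entries of mean m: P(s) = prod (1 + m s_mu)/2.\<close>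
definition iid_prob :: "real \<Rightarrow> nat \<Rightarrow> (nat \<Rightarrow> real) \<Rightarrow> real" where
  "iid_prob m M s = (\<Prod>\<mu><M. (1 + m * s \<mu>) / 2)"

definition g_fun :: "nat \<Rightarrow> (nat \<Rightarrow> real) \<Rightarrow> real \<Rightarrow> real \<Rightarrow> real \<Rightarrow> real" where
  "g_fun M p \<beta> lam h =
     ln 2 - \<beta> * (\<Sum>\<mu><M. (p \<mu>)\<^sup>2) / 2
     + (\<Sum>s\<in>spins M. iid_prob (m0 \<beta> h) M s *
          ln (cosh (\<beta> * (\<Sum>\<mu><M. s \<mu> * p \<mu>) + lam)))"

end

theory Submission
  imports Defs "HOL-Real_Asymp.Real_Asymp"
begin

lemma pair_sum: fixes N :: nat shows "(\<Sum>j<N. \<Sum>i<j. x i * x j) = ((\<Sum>i<N. x i)^2 - (\<Sum>i<N. (x i)^2)) / (2::real)"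
proof (induction N)
  case 0 then show ?case by simp
next
  case (Suc N)
  have "(\<Sum>j<Suc N. \<Sum>i<j. x i * x j) = (\<Sum>j<N. \<Sum>i<j. x i * x j) + (\<Sum>i<N. x i) * x N"
    by (simp add: sum_distrib_right)
  also have "\<dots> = ((\<Sum>i<Suc N. x i)^2 - (\<Sum>i<Suc N. (x i)^2)) / 2"
    using Suc by (simp add: power2_eq_square algebra_simps add_divide_distrib)
  finally show ?case .
qed

lemma spins_val: "\<xi> \<in> spins N \<Longrightarrow> i < N \<Longrightarrow> \<xi> i = -1 \<or> \<xi> i = 1"
  unfolding spins_def by (auto simp: PiE_iff)

lemma spins_sq: "\<xi> \<in> spins N \<Longrightarrow> i < N \<Longrightarrow> (\<xi> i)^2 = 1"
  using spins_val by fastforce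

lemma finite_spins: "finite (spins N)"
  unfolding spins_def by (auto intro!: finite_PiE)

lemma sum_exp_spins:
  "(\<Sum>\<xi>\<in>spins N. exp (\<Sum>i<N. \<xi> i * t i)) = (\<Prod>i<N. 2 * cosh (t i))"
proof -
  have "(\<Prod>i<N. 2 * cosh (t i)) = (\<Prod>i<N. \<Sum>y\<in>{-1,1::real}. exp (y * t i))"
    by (intro prod.cong) (auto simp: cosh_def)
  also have "\<dots> = (\<Sum>g\<in>spins N. \<Prod>i<N. exp (g i * t i))"
    unfolding spins_def by (rule prod_sum_PiE) auto
  also have "\<dots> = (\<Sum>\<xi>\<in>spins N. exp (\<Sum>i<N. \<xi> i * t i))"
    by (simp add: exp_sum)
  finally show ?thesis by simp
qed

definition ovl :: "nat \<Rightarrow> (nat \<Rightarrow> nat \<Rightarrow> real) \<Rightarrow> nat \<Rightarrow> (nat \<Rightarrow> real) \<Rightarrow> real" where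
  "ovl N S \<mu> \<xi> = (\<Sum>i<N. S \<mu> i * \<xi> i)"

definition Gemp :: "nat \<Rightarrow> nat \<Rightarrow> (nat \<Rightarrow> nat \<Rightarrow> real) \<Rightarrow> real \<Rightarrow> real \<Rightarrow> (nat \<Rightarrow> real) \<Rightarrow> real" where
  "Gemp M N S \<beta> lam p = ln 2 - \<beta> * (\<Sum>\<mu><M. (p \<mu>)^2) / 2
      + (\<Sum>i<N. ln (cosh (\<beta> * (\<Sum>\<mu><M. S \<mu> i * p \<mu>) + lam))) / real N"

definition pm1 :: "nat \<Rightarrow> nat \<Rightarrow> (nat \<Rightarrow> nat \<Rightarrow> real) \<Rightarrow> bool" where
  "pm1 M N S \<longleftrightarrow> (\<forall>\<mu><M. \<forall>i<N. S \<mu> i = -1 \<or> S \<mu> i = 1)"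

lemma exponent_eq:
  assumes "pm1 M N S" "\<xi> \<in> spins N" "N \<ge> 1"
  shows "\<beta> / real N * (\<Sum>\<mu><M. \<Sum>j<N. \<Sum>i<j. S \<mu> i * S \<mu> j * \<xi> i * \<xi> j) + lam * (\<Sum>i<N. \<xi> i)
     = \<beta> / (2 * real N) * (\<Sum>\<mu><M. (ovl N S \<mu> \<xi>)^2) - \<beta> * real M / 2 + lam * (\<Sum>i<N. \<xi> i)"
proof -
  have "(\<Sum>j<N. \<Sum>i<j. S \<mu> i * S \<mu> j * \<xi> i * \<xi> j) = ((ovl N S \<mu> \<xi>)^2 - real N) / 2" if "\<mu> < M" for \<mu>
  proof -
    have sq: "(S \<mu> i * \<xi> i)^2 = 1" if "i < N" for i
    proof -
      have "S \<mu> i = -1 \<or> S \<mu> i = 1" using assms(1) that \<open>\<mu> < M\<close> unfolding pm1_def by auto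
      then show ?thesis using spins_val[OF assms(2) that] by (auto simp: power2_eq_square)
    qed
    have "(\<Sum>j<N. \<Sum>i<j. S \<mu> i * S \<mu> j * \<xi> i * \<xi> j) = (\<Sum>j<N. \<Sum>i<j. (S \<mu> i * \<xi> i) * (S \<mu> j * \<xi> j))"
      by (simp add: algebra_simps)
    also have "\<dots> = ((ovl N S \<mu> \<xi>)^2 - (\<Sum>i<N. (S \<mu> i * \<xi> i)^2)) / 2"
      unfolding ovl_def by (rule pair_sum)
    also have "(\<Sum>i<N. (S \<mu> i * \<xi> i)^2) = real N" using sq by simp
    finally show ?thesis .
  qed
  then have "(\<Sum>\<mu><M. \<Sum>j<N. \<Sum>i<j. S \<mu> i * S \<mu> j * \<xi> i * \<xi> j) = (\<Sum>\<mu><M. ((ovl N S \<mu> \<xi>)^2 - real N) / 2)"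
    by (intro sum.cong refl) auto
  also have "\<dots> = (\<Sum>\<mu><M. (ovl N S \<mu> \<xi>)^2) / 2 - real M * real N / 2"
    by (simp add: sum_subtractf sum_divide_distrib[symmetric])
  finally have fin: "(\<Sum>\<mu><M. \<Sum>j<N. \<Sum>i<j. S \<mu> i * S \<mu> j * \<xi> i * \<xi> j) = (\<Sum>\<mu><M. (ovl N S \<mu> \<xi>)^2) / 2 - real M * real N / 2" .
  show ?thesis using assms(3) by (subst fin) (simp add: field_simps)
qed

lemma sum_tilted:
  fixes q :: "nat \<Rightarrow> real"
  assumes "N \<ge> 1"
  shows "(\<Sum>\<xi>\<in>spins N. exp (\<beta> * (\<Sum>\<mu><M. q \<mu> * ovl N S \<mu> \<xi>) - real N * \<beta> * (\<Sum>\<mu><M. (q \<mu>)^2) / 2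
            + lam * (\<Sum>i<N. \<xi> i))) = exp (real N * Gemp M N S \<beta> lam q)"
proof -
  let ?t = "\<lambda>i. \<beta> * (\<Sum>\<mu><M. S \<mu> i * q \<mu>) + lam"
  let ?c = "real N * \<beta> * (\<Sum>\<mu><M. (q \<mu>)^2) / 2"
  have e: "\<beta> * (\<Sum>\<mu><M. q \<mu> * ovl N S \<mu> \<xi>) + lam * (\<Sum>i<N. \<xi> i) = (\<Sum>i<N. \<xi> i * ?t i)" for \<xi>
  proof -
    have "(\<Sum>\<mu><M. q \<mu> * ovl N S \<mu> \<xi>) = (\<Sum>\<mu><M. \<Sum>i<N. \<xi> i * (S \<mu> i * q \<mu>))"
      unfolding ovl_def by (simp add: sum_distrib_left mult_ac)
    also have "\<dots> = (\<Sum>i<N. \<Sum>\<mu><M. \<xi> i * (S \<mu> i * q \<mu>))" by (rule sum.swap)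
    also have "\<dots> = (\<Sum>i<N. \<xi> i * (\<Sum>\<mu><M. S \<mu> i * q \<mu>))" by (simp add: sum_distrib_left)
    finally have A: "(\<Sum>\<mu><M. q \<mu> * ovl N S \<mu> \<xi>) = (\<Sum>i<N. \<xi> i * (\<Sum>\<mu><M. S \<mu> i * q \<mu>))" .
    have "(\<Sum>i<N. \<xi> i * ?t i) = \<beta> * (\<Sum>i<N. \<xi> i * (\<Sum>\<mu><M. S \<mu> i * q \<mu>)) + lam * (\<Sum>i<N. \<xi> i)"
      by (simp add: distrib_left sum.distrib sum_distrib_left mult_ac)
    then show ?thesis by (simp add: A)
  qed
  have "(\<Sum>\<xi>\<in>spins N. exp (\<beta> * (\<Sum>\<mu><M. q \<mu> * ovl N S \<mu> \<xi>) - ?c + lam * (\<Sum>i<N. \<xi> i)))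
      = (\<Sum>\<xi>\<in>spins N. exp (- ?c) * exp (\<Sum>i<N. \<xi> i * ?t i))"
  proof (intro sum.cong refl)
    fix \<xi> show "exp (\<beta> * (\<Sum>\<mu><M. q \<mu> * ovl N S \<mu> \<xi>) - ?c + lam * (\<Sum>i<N. \<xi> i)) = exp (- ?c) * exp (\<Sum>i<N. \<xi> i * ?t i)"
      unfolding e[symmetric] by (simp add: mult_exp_exp algebra_simps)
  qed
  also have "\<dots> = exp (- ?c) * (\<Prod>i<N. 2 * cosh (?t i))"
    by (simp add: sum_distrib_left[symmetric] sum_exp_spins)
  also have "(\<Prod>i<N. 2 * cosh (?t i)) = exp (\<Sum>i<N. ln 2 + ln (cosh (?t i)))"
    by (simp add: exp_sum exp_add)
  also have "(\<Sum>i<N. ln 2 + ln (cosh (?t i))) = real N * ln 2 + (\<Sum>i<N. ln (cosh (?t i)))"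
    by (simp add: sum.distrib)
  also have "exp (- ?c) * exp (real N * ln 2 + (\<Sum>i<N. ln (cosh (?t i)))) = exp (real N * Gemp M N S \<beta> lam q)"
    unfolding Gemp_def using assms by (simp add: exp_add[symmetric] field_simps)
  finally show ?thesis by simp
qed

lemma lncosh_le_abs: "ln (cosh (y::real)) \<le> \<bar>y\<bar>"
proof -
  have "cosh y \<le> exp \<bar>y\<bar>" unfolding cosh_def
    by (cases "y \<ge> 0") (auto simp: field_simps)
  moreover have "cosh y > 0" by (simp add: cosh_real_pos)
  ultimately show ?thesis using ln_le_cancel_iff[of "cosh y" "exp \<bar>y\<bar>"] by simp
qed

lemma lncosh_nonneg: "ln (cosh (y::real)) \<ge> 0"
  using cosh_real_ge_1 by simp

lemma pm1_abs: "pm1 M N S \<Longrightarrow> \<mu> < M \<Longrightarrow> i < N \<Longrightarrow> \<bar>S \<mu> i\<bar> = 1"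
  unfolding pm1_def by fastforce

lemma Gemp_le:
  assumes "N \<ge> 1" "\<beta> > 0" "pm1 M N S"
  shows "Gemp M N S \<beta> lam p \<le> ln 2 + \<beta> * real M / 2 + \<bar>lam\<bar>"
proof -
  have t: "ln (cosh (\<beta> * (\<Sum>\<mu><M. S \<mu> i * p \<mu>) + lam)) \<le> \<beta> * (\<Sum>\<mu><M. \<bar>p \<mu>\<bar>) + \<bar>lam\<bar>" if "i < N" for i
  proof -
    have "\<bar>\<Sum>\<mu><M. S \<mu> i * p \<mu>\<bar> \<le> (\<Sum>\<mu><M. \<bar>S \<mu> i * p \<mu>\<bar>)" by (rule sum_abs)
    also have "\<dots> = (\<Sum>\<mu><M. \<bar>p \<mu>\<bar>)"
      using assms(3) that by (intro sum.cong refl) (auto simp: abs_mult pm1_abs)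
    finally have sa: "\<bar>\<Sum>\<mu><M. S \<mu> i * p \<mu>\<bar> \<le> (\<Sum>\<mu><M. \<bar>p \<mu>\<bar>)" .
    then have "\<bar>\<beta> * (\<Sum>\<mu><M. S \<mu> i * p \<mu>) + lam\<bar> \<le> \<beta> * (\<Sum>\<mu><M. \<bar>p \<mu>\<bar>) + \<bar>lam\<bar>"
    proof -
      have "\<bar>\<beta> * (\<Sum>\<mu><M. S \<mu> i * p \<mu>)\<bar> = \<beta> * \<bar>\<Sum>\<mu><M. S \<mu> i * p \<mu>\<bar>" using assms(2) by (simp add: abs_mult)
      also have "\<dots> \<le> \<beta> * (\<Sum>\<mu><M. \<bar>p \<mu>\<bar>)" using assms(2) sa by simp
      finally show ?thesis by (smt (verit) abs_triangle_ineq)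
    qed
    then show ?thesis using lncosh_le_abs order_trans by blast
  qed
  have "(\<Sum>i<N. ln (cosh (\<beta> * (\<Sum>\<mu><M. S \<mu> i * p \<mu>) + lam))) \<le> real N * (\<beta> * (\<Sum>\<mu><M. \<bar>p \<mu>\<bar>) + \<bar>lam\<bar>)"
    using sum_mono[of "{..<N}", OF t] by simp
  then have avg: "(\<Sum>i<N. ln (cosh (\<beta> * (\<Sum>\<mu><M. S \<mu> i * p \<mu>) + lam))) / real N \<le> \<beta> * (\<Sum>\<mu><M. \<bar>p \<mu>\<bar>) + \<bar>lam\<bar>"
    using assms(1) by (simp add: divide_le_eq mult.commute)
  have "(\<Sum>\<mu><M. \<bar>p \<mu>\<bar> - (p \<mu>)^2 / 2) \<le> (\<Sum>\<mu><M. 1/2)"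
  proof (intro sum_mono)
    fix \<mu> have "0 \<le> (\<bar>p \<mu>\<bar> - 1)^2" by simp
    then have "0 \<le> \<bar>p \<mu>\<bar> * \<bar>p \<mu>\<bar> - 2 * \<bar>p \<mu>\<bar> + 1" by (simp add: power2_eq_square algebra_simps)
    then show "\<bar>p \<mu>\<bar> - (p \<mu>)^2 / 2 \<le> 1/2" by (simp add: power2_eq_square)
  qed
  then have "(\<Sum>\<mu><M. \<bar>p \<mu>\<bar>) - (\<Sum>\<mu><M. (p \<mu>)^2) / 2 \<le> real M / 2"
    by (simp add: sum_subtractf sum_divide_distrib[symmetric])
  then have "\<beta> * ((\<Sum>\<mu><M. \<bar>p \<mu>\<bar>) - (\<Sum>\<mu><M. (p \<mu>)^2) / 2) \<le> \<beta> * (real M / 2)"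
    using assms(2) by (intro mult_left_mono) auto
  then have "\<beta> * (\<Sum>\<mu><M. \<bar>p \<mu>\<bar>) - \<beta> * (\<Sum>\<mu><M. (p \<mu>)^2) / 2 \<le> \<beta> * real M / 2"
    by (simp add: algebra_simps)
  then show ?thesis using avg unfolding Gemp_def by linarith
qed

lemma bdd_Gemp:
  assumes "N \<ge> 1" "\<beta> > 0" "pm1 M N S"
  shows "bdd_above ((Gemp M N S \<beta> lam) ` A)"
  using Gemp_le[OF assms] by (intro bdd_aboveI) auto

lemma PiE_UNIV_ne: "({..<M} \<rightarrow>\<^sub>E (UNIV::real set)) \<noteq> {}"
  by (simp add: PiE_eq_empty_iff)

lemma spins_abs: "\<xi> \<in> spins N \<Longrightarrow> i < N \<Longrightarrow> \<bar>\<xi> i\<bar> = 1"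
  using spins_val by fastforce

lemma ovl_int:
  assumes "pm1 M N S" "\<xi> \<in> spins N" "\<mu> < M"
  shows "\<exists>k::int. ovl N S \<mu> \<xi> = real_of_int k \<and> -int N \<le> k \<and> k \<le> int N"
proof -
  have "ovl N S \<mu> \<xi> \<in> \<int>" unfolding ovl_def
  proof (intro Ints_sum)
    fix i assume "i \<in> {..<N}"
    then have "S \<mu> i \<in> {-1,1}" "\<xi> i \<in> {-1,1}" using assms spins_val[OF assms(2)] unfolding pm1_def by auto
    then show "S \<mu> i * \<xi> i \<in> \<int>" by auto
  qed
  then obtain k where k: "ovl N S \<mu> \<xi> = real_of_int k" by (auto elim: Ints_cases)
  have "\<bar>ovl N S \<mu> \<xi>\<bar> \<le> (\<Sum>i<N. \<bar>S \<mu> i * \<xi> i\<bar>)" unfolding ovl_def by (rule sum_abs)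
  also have "\<dots> = (\<Sum>i<N. 1)"
    using assms by (intro sum.cong refl) (auto simp: abs_mult pm1_abs spins_abs)
  finally have "\<bar>real_of_int k\<bar> \<le> real N" using k by simp
  then have "\<bar>k\<bar> \<le> int N" by linarith
  then show ?thesis using k by auto
qed

lemma laplace:
  fixes lam :: real
  assumes N: "N \<ge> 1" and b: "\<beta> > 0" and S: "pm1 M N S"
  defines "F \<equiv> (SUP p\<in>({..<M} \<rightarrow>\<^sub>E (UNIV::real set)). Gemp M N S \<beta> lam p)"
  shows "Zpart N S \<beta> lam M > 0"
    and "F - \<beta> * real M / (2 * real N) \<le> ln (Zpart N S \<beta> lam M) / real N"
    and "ln (Zpart N S \<beta> lam M) / real N \<le> F - \<beta> * real M / (2 * real N) + real M * ln (2 * real N + 1) / real N"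
proof -
  let ?Z = "Zpart N S \<beta> lam M"
  define E where "E \<xi> = \<beta> / (2 * real N) * (\<Sum>\<mu><M. (ovl N S \<mu> \<xi>)^2) - \<beta> * real M / 2 + lam * (\<Sum>i<N. \<xi> i)" for \<xi>
  have Zeq: "?Z = (\<Sum>\<xi>\<in>spins N. exp (E \<xi>))"
    unfolding Zpart_def E_def using exponent_eq[OF S _ N] by (intro sum.cong refl) auto
  have ne: "spins N \<noteq> {}" unfolding spins_def by (simp add: PiE_eq_empty_iff)
  show Zpos: "?Z > 0" unfolding Zeq using ne finite_spins by (intro sum_pos) auto
  define Te where "Te \<xi> q = \<beta> * (\<Sum>\<mu><M. q \<mu> * ovl N S \<mu> \<xi>) - real N * \<beta> * (\<Sum>\<mu><M. (q \<mu>)^2) / 2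
            + lam * (\<Sum>i<N. \<xi> i)" for \<xi> q
  define T where "T \<xi> q = exp (Te \<xi> q)" for \<xi> q
  have sumT: "(\<Sum>\<xi>\<in>spins N. T \<xi> q) = exp (real N * Gemp M N S \<beta> lam q)" for q
    unfolding T_def Te_def using sum_tilted[OF N] .
  have bdd: "bdd_above ((Gemp M N S \<beta> lam) ` ({..<M} \<rightarrow>\<^sub>E UNIV))" using bdd_Gemp[OF N b S] .
  have Nr: "real N > 0" using N by simp
  have lowp: "Gemp M N S \<beta> lam p \<le> ln ?Z / real N + \<beta> * real M / (2 * real N)" for p
  proof -
    have per: "\<beta> * q * w - real N * \<beta> * q^2 / 2 \<le> \<beta> / (2 * real N) * w^2" for q w :: real
    proof -
      have "0 \<le> \<beta> / (2 * real N) * (w - real N * q)^2" using b Nr by simp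
      then show ?thesis using Nr by (simp add: power2_eq_square field_simps)
    qed
    have "E \<xi> \<ge> - \<beta> * real M / 2 + Te \<xi> p" for \<xi>
    proof -
      have "(\<Sum>\<mu><M. \<beta> * p \<mu> * ovl N S \<mu> \<xi> - real N * \<beta> * (p \<mu>)^2 / 2) \<le> (\<Sum>\<mu><M. \<beta> / (2 * real N) * (ovl N S \<mu> \<xi>)^2)"
        by (intro sum_mono per)
      then show ?thesis unfolding E_def Te_def
        by (simp add: sum_subtractf sum_distrib_left sum_divide_distrib[symmetric] mult_ac)
    qed
    then have "exp (- \<beta> * real M / 2) * T \<xi> p \<le> exp (E \<xi>)" for \<xi>
      unfolding T_def mult_exp_exp by simp
    then have "exp (- \<beta> * real M / 2) * (\<Sum>\<xi>\<in>spins N. T \<xi> p) \<le> ?Z"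
      unfolding Zeq sum_distrib_left by (intro sum_mono) auto
    then have "exp (- \<beta> * real M / 2 + real N * Gemp M N S \<beta> lam p) \<le> ?Z"
      by (simp add: sumT mult_exp_exp)
    then have "- \<beta> * real M / 2 + real N * Gemp M N S \<beta> lam p \<le> ln ?Z"
      using Zpos by (metis exp_le_cancel_iff exp_ln)
    then show ?thesis using Nr by (simp add: field_simps)
  qed
  have "F \<le> ln ?Z / real N + \<beta> * real M / (2 * real N)"
    unfolding F_def using PiE_UNIV_ne by (intro cSUP_least) (auto intro: lowp)
  then show "F - \<beta> * real M / (2 * real N) \<le> ln ?Z / real N" by simp
  define qv where "qv \<xi> = (\<lambda>\<mu>\<in>{..<M}. ovl N S \<mu> \<xi> / real N)" for \<xi>
  define B where "B = (\<lambda>k::int. real_of_int k / real N) ` {-int N..int N}"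
  define Q where "Q = qv ` spins N"
  have QB: "Q \<subseteq> {..<M} \<rightarrow>\<^sub>E B"
  proof
    fix q assume "q \<in> Q"
    then obtain \<xi> where \<xi>: "\<xi> \<in> spins N" "q = qv \<xi>" unfolding Q_def by auto
    have "ovl N S \<mu> \<xi> / real N \<in> B" if mu: "\<mu> < M" for \<mu>
    proof -
      obtain k where k: "ovl N S \<mu> \<xi> = real_of_int k" "-int N \<le> k" "k \<le> int N"
        using ovl_int[OF S \<xi>(1) mu] by blast
      then show ?thesis unfolding B_def by auto
    qed
    then show "q \<in> {..<M} \<rightarrow>\<^sub>E B" unfolding \<xi>(2) qv_def by (auto simp: PiE_iff)
  qed
  have finB: "finite B" unfolding B_def by simp
  have cardB: "card B \<le> 2 * N + 1"
  proof -
    have "card B \<le> card {-int N..int N}" unfolding B_def by (rule card_image_le) simp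
    also have "\<dots> = 2 * N + 1" by simp
    finally show ?thesis .
  qed
  have finQ: "finite Q" unfolding Q_def using finite_spins by simp
  have cardQ: "real (card Q) \<le> (2 * real N + 1) ^ M"
  proof -
    have "card Q \<le> card ({..<M} \<rightarrow>\<^sub>E B)" using QB finB by (intro card_mono) (auto intro: finite_PiE)
    also have "\<dots> = card B ^ M" by (simp add: card_PiE)
    also have "\<dots> \<le> (2 * N + 1) ^ M" using cardB by (rule power_mono) simp
    finally show ?thesis by (metis of_nat_le_iff of_nat_power of_nat_Suc of_nat_mult of_nat_numeral add.commute plus_1_eq_Suc)
  qed
  have Qne: "Q \<noteq> {}" unfolding Q_def using ne by simp
  have QP: "Q \<subseteq> {..<M} \<rightarrow>\<^sub>E UNIV" using QB by (auto simp: PiE_iff)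
  have Eeq: "exp (E \<xi>) = exp (- \<beta> * real M / 2) * T \<xi> (qv \<xi>)" for \<xi>
  proof -
    have "(\<Sum>\<mu><M. \<beta> / (2 * real N) * (ovl N S \<mu> \<xi>)^2) = (\<Sum>\<mu><M. \<beta> * qv \<xi> \<mu> * ovl N S \<mu> \<xi> - real N * \<beta> * (qv \<xi> \<mu>)^2 / 2)"
      using Nr by (intro sum.cong refl) (simp add: qv_def power2_eq_square field_simps)
    then show ?thesis unfolding E_def T_def Te_def
      by (simp add: mult_exp_exp sum_subtractf sum_distrib_left sum_divide_distrib[symmetric] mult_ac)
  qed
  have "?Z \<le> (\<Sum>\<xi>\<in>spins N. \<Sum>q\<in>Q. exp (- \<beta> * real M / 2) * T \<xi> q)"
    unfolding Zeq Eeq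
  proof (intro sum_mono)
    fix \<xi> assume "\<xi> \<in> spins N"
    then have "qv \<xi> \<in> Q" unfolding Q_def by simp
    then show "exp (- \<beta> * real M / 2) * T \<xi> (qv \<xi>) \<le> (\<Sum>q\<in>Q. exp (- \<beta> * real M / 2) * T \<xi> q)"
      using finQ by (intro member_le_sum) (auto simp: T_def)
  qed
  also have "\<dots> = (\<Sum>q\<in>Q. exp (- \<beta> * real M / 2) * exp (real N * Gemp M N S \<beta> lam q))"
    by (subst sum.swap) (simp add: sum_distrib_left[symmetric] sumT)
  also have "\<dots> \<le> (\<Sum>q\<in>Q. exp (- \<beta> * real M / 2) * exp (real N * F))"
  proof (intro sum_mono mult_left_mono)
    fix q assume "q \<in> Q"
    then have "Gemp M N S \<beta> lam q \<le> F" unfolding F_def using QP bdd by (intro cSUP_upper) auto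
    then show "exp (real N * Gemp M N S \<beta> lam q) \<le> exp (real N * F)" using Nr by simp
  qed simp
  also have "\<dots> = real (card Q) * exp (- \<beta> * real M / 2 + real N * F)" by (simp add: mult_exp_exp)
  finally have Zle: "?Z \<le> real (card Q) * exp (- \<beta> * real M / 2 + real N * F)" .
  have cQpos: "real (card Q) > 0" using finQ Qne by (simp add: card_gt_0_iff)
  have "ln ?Z \<le> ln (real (card Q) * exp (- \<beta> * real M / 2 + real N * F))"
    using Zle Zpos by simp
  also have "\<dots> = ln (real (card Q)) - \<beta> * real M / 2 + real N * F"
    using cQpos by (simp add: ln_mult)
  also have "ln (real (card Q)) \<le> ln ((2 * real N + 1) ^ M)" using cardQ cQpos by simp
  also have "ln ((2 * real N + 1) ^ M) = real M * ln (2 * real N + 1)" by (simp add: ln_realpow)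
  finally have "ln ?Z \<le> real M * ln (2 * real N + 1) - \<beta> * real M / 2 + real N * F" by simp
  then show "ln ?Z / real N \<le> F - \<beta> * real M / (2 * real N) + real M * ln (2 * real N + 1) / real N"
    using Nr by (simp add: field_simps)
qed

lemma deriv_lncosh: "((\<lambda>x::real. ln (cosh x)) has_real_derivative tanh x) (at x)"
proof -
  have "((\<lambda>x::real. ln (cosh x)) has_real_derivative (1 / cosh x * sinh x)) (at x)"
    by (auto intro!: derivative_eq_intros)
  then show ?thesis by (simp add: tanh_def)
qed

lemma deriv_tanh: "(tanh has_real_derivative (1 - tanh x ^ 2)) (at (x::real))"
proof -
  have "((\<lambda>x. tanh x) has_real_derivative (1 - tanh x ^ 2) * 1) (at (x::real))"
    by (rule has_field_derivative_tanh) (auto intro: DERIV_ident)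
  then show ?thesis by simp
qed

lemma tanh_mono: "a \<le> b \<Longrightarrow> tanh (a::real) \<le> tanh b"
  using tanh_real_strict_mono by (metis order_le_less strict_mono_less)

lemma tanh_less: "a < b \<Longrightarrow> tanh (a::real) < tanh b"
  using tanh_real_strict_mono by (metis strict_mono_less)

lemma tanh_abs_lt1: "\<bar>tanh (x::real)\<bar> < 1"
  using tanh_real_lt_1[of x] tanh_real_gt_neg1[of x] by linarith

lemma tanh_sq_le1: "tanh (x::real) ^ 2 \<le> 1"
  using tanh_abs_lt1[of x] by (metis abs_le_square_iff abs_one less_imp_le power_one)

lemma lncosh_diff: "ln (cosh b) - ln (cosh a) \<le> (b - a) * tanh (b::real)"
proof (cases a b rule: linorder_cases)
  case less
  obtain z where z: "a < z" "z < b" "ln (cosh b) - ln (cosh a) = (b - a) * tanh z"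
    using MVT2[OF less, of "\<lambda>x. ln (cosh x)" tanh] deriv_lncosh by blast
  have "tanh z \<le> tanh b" using z by (intro tanh_mono) simp
  then show ?thesis using z less by (simp add: mult_left_mono)
next
  case equal then show ?thesis by simp
next
  case greater
  obtain z where z: "b < z" "z < a" "ln (cosh a) - ln (cosh b) = (a - b) * tanh z"
    using MVT2[OF greater, of "\<lambda>x. ln (cosh x)" tanh] deriv_lncosh by blast
  have "tanh b \<le> tanh z" using z by (intro tanh_mono) simp
  then have "(a - b) * tanh b \<le> (a - b) * tanh z" using greater by (simp add: mult_left_mono)
  then show ?thesis using z by (simp add: algebra_simps)
qed

lemma tanh_lip: "\<bar>tanh a - tanh b\<bar> \<le> \<bar>a - (b::real)\<bar>"
proof -
  have *: "tanh y - tanh x \<le> y - x" "0 \<le> tanh y - tanh x" if xy: "x < y" for x y :: real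
  proof -
    obtain z where z: "x < z" "z < y" "tanh y - tanh x = (y - x) * (1 - tanh z ^ 2)"
      using MVT2[OF xy, of tanh "\<lambda>x. 1 - tanh x ^ 2"] deriv_tanh by blast
    have "0 \<le> 1 - tanh z ^ 2" "1 - tanh z ^ 2 \<le> 1" using tanh_sq_le1[of z] by auto
    then show "tanh y - tanh x \<le> y - x" "0 \<le> tanh y - tanh x" using z xy
      by (auto simp: mult_left_le)
  qed
  show ?thesis using *[of a b] *[of b a] by (cases a b rule: linorder_cases) auto
qed

lemma lncosh_lip: "\<bar>ln (cosh a) - ln (cosh b)\<bar> \<le> \<bar>a - (b::real)\<bar>"
proof -
  have *: "(u - v) * tanh u \<le> \<bar>u - v\<bar>" for u v :: real
  proof -
    have "(u - v) * tanh u \<le> \<bar>(u - v) * tanh u\<bar>" by (rule abs_ge_self)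
    also have "\<dots> = \<bar>u - v\<bar> * \<bar>tanh u\<bar>" by (rule abs_mult)
    also have "\<dots> \<le> \<bar>u - v\<bar> * 1" using tanh_abs_lt1[of u] by (intro mult_left_mono) auto
    finally show ?thesis by simp
  qed
  have "ln (cosh a) - ln (cosh b) \<le> \<bar>a - b\<bar>"
    using lncosh_diff[of a b] *[of a b] by linarith
  moreover have "ln (cosh b) - ln (cosh a) \<le> \<bar>a - b\<bar>"
    using lncosh_diff[of b a] *[of b a] by (simp add: abs_minus_commute)
  ultimately show ?thesis by linarith
qed

lemma m0_obj_sym: "m0_obj \<beta> (-h) (-x) = m0_obj \<beta> h x"
proof -
  have "\<beta> * - x + - h = - (\<beta> * x + h)" by simp
  then show ?thesis unfolding m0_obj_def by (simp only: cosh_minus) simp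
qed

lemma deriv_obj: "(m0_obj \<beta> h has_real_derivative (\<beta> * tanh (\<beta> * x + h) - \<beta> * x)) (at x)"
proof -
  have d0: "((\<lambda>x. \<beta> * x + h) has_real_derivative \<beta>) (at x)"
    by (auto intro!: derivative_eq_intros)
  have d1: "((\<lambda>x. ln (cosh (\<beta> * x + h))) has_real_derivative tanh (\<beta> * x + h) * \<beta>) (at x)"
    by (rule DERIV_chain2[OF deriv_lncosh d0])
  have d2: "((\<lambda>x. \<beta> * x\<^sup>2 / 2) has_real_derivative \<beta> * x) (at x)"
    by (auto intro!: derivative_eq_intros)
  have "((\<lambda>x. ln 2 + ln (cosh (\<beta> * x + h)) - \<beta> * x\<^sup>2 / 2) has_real_derivative
          (0 + tanh (\<beta> * x + h) * \<beta> - \<beta> * x)) (at x)"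
    by (intro DERIV_diff DERIV_add d1 d2 DERIV_const)
  then show ?thesis unfolding m0_obj_def[abs_def] by (simp add: algebra_simps)
qed

lemma crit_fix:
  assumes "\<beta> > 0" "\<forall>y. m0_obj \<beta> h y \<le> m0_obj \<beta> h x"
  shows "x = tanh (\<beta> * x + h)"
proof -
  have "\<beta> * tanh (\<beta> * x + h) - \<beta> * x = 0"
    using DERIV_local_max[OF deriv_obj, of 1] assms by auto
  then show ?thesis using assms(1) by (simp add: right_diff_distrib[symmetric])
qed

lemma obj_upper: "\<beta> > 0 \<Longrightarrow> m0_obj \<beta> h y \<le> ln 2 + \<beta> * \<bar>y\<bar> + \<bar>h\<bar> - \<beta> * y^2 / 2"
proof -
  assume b: "\<beta> > 0"
  have "\<bar>\<beta> * y + h\<bar> \<le> \<bar>\<beta> * y\<bar> + \<bar>h\<bar>" by (rule abs_triangle_ineq)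
  also have "\<bar>\<beta> * y\<bar> = \<beta> * \<bar>y\<bar>" using b by (simp add: abs_mult)
  finally show ?thesis unfolding m0_obj_def using lncosh_le_abs[of "\<beta> * y + h"] by linarith
qed

lemma obj_ge0: "m0_obj \<beta> h 0 \<ge> ln 2"
  unfolding m0_obj_def using lncosh_nonneg by simp

lemma obj_exists:
  assumes "\<beta> > 0"
  shows "\<exists>x. \<forall>y. m0_obj \<beta> h y \<le> m0_obj \<beta> h x"
proof -
  define R where "R = 3 + 2 * \<bar>h\<bar> / \<beta>"
  have cont: "continuous_on {-R..R} (m0_obj \<beta> h)"
    by (intro continuous_at_imp_continuous_on ballI DERIV_isCont[OF deriv_obj])
  have hb: "2 * \<bar>h\<bar> / \<beta> \<ge> 0" using assms by simp
  have "0 \<in> {-R..R}" unfolding R_def using hb by auto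
  then obtain x where x: "x \<in> {-R..R}" "\<forall>y\<in>{-R..R}. m0_obj \<beta> h y \<le> m0_obj \<beta> h x"
    using continuous_attains_sup[OF compact_Icc _ cont] by blast
  have "m0_obj \<beta> h y \<le> m0_obj \<beta> h x" for y
  proof (cases "\<bar>y\<bar> \<le> R")
    case True then have "y \<in> {-R..R}" by auto
    then show ?thesis using x by blast
  next
    case False
    then have yR: "\<bar>y\<bar> \<ge> R" by simp
    have "\<bar>y\<bar> / 2 - 1 \<ge> 1/2 + \<bar>h\<bar> / \<beta>" using yR unfolding R_def by simp
    moreover have "\<beta> * \<bar>y\<bar> \<ge> \<beta> * 3"
    proof -
      have "\<bar>y\<bar> \<ge> 3" using yR hb unfolding R_def by linarith
      then show ?thesis using assms by (intro mult_left_mono) auto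
    qed
    moreover have "0 \<le> 1/2 + \<bar>h\<bar> / \<beta>" using assms by simp
    ultimately have "\<beta> * \<bar>y\<bar> * (\<bar>y\<bar> / 2 - 1) \<ge> \<beta> * 3 * (1/2 + \<bar>h\<bar> / \<beta>)"
      using assms by (intro mult_mono) auto
    also have "\<beta> * 3 * (1/2 + \<bar>h\<bar> / \<beta>) = 3 * \<beta> / 2 + 3 * \<bar>h\<bar>" using assms by (simp add: field_simps)
    finally have "\<beta> * \<bar>y\<bar> * (\<bar>y\<bar> / 2 - 1) > \<bar>h\<bar>" using assms by linarith
    then have "\<beta> * \<bar>y\<bar> + \<bar>h\<bar> - \<beta> * y^2 / 2 < 0"
      by (simp add: power2_eq_square algebra_simps abs_mult_self_eq)
    then have "m0_obj \<beta> h y < ln 2" using obj_upper[OF assms, of h y] by linarith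
    also have "\<dots> \<le> m0_obj \<beta> h 0" by (rule obj_ge0)
    also have "\<dots> \<le> m0_obj \<beta> h x" using x \<open>0 \<in> {-R..R}\<close> by auto
    finally show ?thesis by simp
  qed
  then show ?thesis by blast
qed

definition hyp :: "real \<Rightarrow> real \<Rightarrow> bool" where
  "hyp \<beta> h \<longleftrightarrow> \<beta> > 0 \<and> (\<beta> \<le> 1 \<or> h \<noteq> 0)"

lemma g_strict_aux:
  assumes "v < (u::real)" "v \<ge> 0 \<or> u \<le> 0"
  shows "v - tanh v < u - tanh u"
proof (rule DERIV_pos_imp_increasing_open[OF assms(1)])
  fix t assume t: "v < t" "t < u"
  then have "t \<noteq> 0" using assms(2) by auto
  have "((\<lambda>t. t - tanh t) has_real_derivative (1 - (1 - tanh t ^ 2))) (at t)"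
    by (intro DERIV_diff DERIV_ident deriv_tanh)
  moreover have "1 - (1 - tanh t ^ 2) > 0" using \<open>t \<noteq> 0\<close> by simp
  ultimately show "\<exists>y. ((\<lambda>t. t - tanh t) has_real_derivative y) (at t) \<and> 0 < y" by blast
next
  show "continuous_on {v..u} (\<lambda>t. t - tanh t)"
    by (intro continuous_at_imp_continuous_on ballI DERIV_isCont)
       (rule DERIV_diff[OF DERIV_ident deriv_tanh])
qed

lemma g_strict: "v < (u::real) \<Longrightarrow> tanh u - tanh v < u - v"
proof -
  assume vu: "v < u"
  show ?thesis
  proof (cases "v \<ge> 0 \<or> u \<le> 0")
    case True then show ?thesis using g_strict_aux[OF vu] by simp
  next
    case False
    then have "v < 0" "0 < u" by auto
    then show ?thesis using g_strict_aux[of v 0] g_strict_aux[of 0 u] by simp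
  qed
qed

lemma uniq_le1:
  fixes \<beta> h x y :: real
  assumes "\<beta> > 0" "\<beta> \<le> 1" "x = tanh (\<beta> * x + h)" "y = tanh (\<beta> * y + h)" "x < y"
  shows False
proof -
  have "tanh (\<beta> * y + h) - tanh (\<beta> * x + h) < (\<beta> * y + h) - (\<beta> * x + h)"
  proof -
    have "\<beta> * x + h < \<beta> * y + h" using assms by simp
    then show ?thesis by (rule g_strict)
  qed
  then have "y - x < \<beta> * (y - x)" using assms(3,4) by (simp add: algebra_simps)
  moreover have "\<beta> * (y - x) \<le> y - x" using assms by (simp add: mult_left_le_one_le)
  ultimately show False by simp
qed

lemma uniq_pos:
  fixes \<beta> h x y :: real
  assumes b: "\<beta> > 0" and h: "h > 0" and x: "x = tanh (\<beta> * x + h)" and y: "y = tanh (\<beta> * y + h)"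
    and x0: "0 < x" and xy: "x < y"
  shows False
proof -
  define gg :: "real \<Rightarrow> real" where "gg t = tanh (\<beta> * t + h) - t" for t
  define gd :: "real \<Rightarrow> real" where "gd t = (1 - tanh (\<beta> * t + h) ^ 2) * \<beta> - 1" for t
  have der: "(gg has_real_derivative gd t) (at t)" for t
  proof -
    have d0: "((\<lambda>t. \<beta> * t + h) has_real_derivative \<beta>) (at t)" by (auto intro!: derivative_eq_intros)
    have "((\<lambda>t. tanh (\<beta> * t + h) - t) has_real_derivative (1 - tanh (\<beta> * t + h) ^ 2) * \<beta> - 1) (at t)"
      by (intro DERIV_diff DERIV_ident DERIV_chain2[OF deriv_tanh d0])
    then show ?thesis unfolding gg_def[abs_def] gd_def .
  qed
  obtain z1 where z1: "0 < z1" "z1 < x" "gg x - gg 0 = (x - 0) * gd z1"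
    using MVT2[OF x0, of gg gd] der by blast
  obtain z2 where z2: "x < z2" "z2 < y" "gg y - gg x = (y - x) * gd z2"
    using MVT2[OF xy, of gg gd] der by blast
  have "gg x = 0" "gg y = 0" unfolding gg_def using x y by simp_all
  have "gg 0 = tanh h" unfolding gg_def by simp
  then have "x * gd z1 = - tanh h" using z1 \<open>gg x = 0\<close> by simp
  moreover have "tanh h > 0" using h by simp
  ultimately have "x * gd z1 < 0" by simp
  then have "gd z1 < 0" using x0 by (simp add: mult_less_0_iff)
  have "gd z2 = 0" using z2 \<open>gg x = 0\<close> \<open>gg y = 0\<close> xy by simp
  have a1: "0 < \<beta> * z1 + h" using b h z1 by (simp add: add_pos_pos)
  have a12: "\<beta> * z1 + h < \<beta> * z2 + h" using b z1 z2 by simp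
  have t1: "0 < tanh (\<beta> * z1 + h)" using a1 by simp
  have t12: "tanh (\<beta> * z1 + h) < tanh (\<beta> * z2 + h)" using tanh_less[OF a12] .
  have "tanh (\<beta> * z1 + h) ^ 2 < tanh (\<beta> * z2 + h) ^ 2"
    using t1 t12 by (intro power_strict_mono) auto
  then have "gd z2 < gd z1" unfolding gd_def using b by simp
  then show False using \<open>gd z1 < 0\<close> \<open>gd z2 = 0\<close> by simp
qed

lemma max_pos:
  assumes b: "\<beta> > 0" and h: "h > 0" and mx: "\<forall>y. m0_obj \<beta> h y \<le> m0_obj \<beta> h x"
  shows "x > 0"
proof (rule ccontr)
  assume "\<not> x > 0"
  then consider "x = 0" | "x < 0" by linarith
  then show False
  proof cases
    case 1
    have "x = tanh (\<beta> * x + h)" using crit_fix[OF b mx] .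
    then show False using 1 h by simp
  next
    case 2
    have "\<beta> * x < 0" using 2 b by (simp add: mult_pos_neg)
    then have a: "\<bar>\<beta> * x + h\<bar> < \<beta> * (- x) + h" using h by (simp add: abs_less_iff)
    have "cosh (\<beta> * x + h) = cosh \<bar>\<beta> * x + h\<bar>" by simp
    also have "\<dots> < cosh (\<beta> * (- x) + h)"
      using a by (subst cosh_real_nonneg_less_iff) auto
    finally have "ln (cosh (\<beta> * x + h)) < ln (cosh (\<beta> * (- x) + h))" by simp
    then have "m0_obj \<beta> h x < m0_obj \<beta> h (-x)" unfolding m0_obj_def by simp
    then show False using mx by (meson not_le)
  qed
qed

lemma uniq_max:
  assumes hy: "hyp \<beta> h" and mx: "\<forall>y. m0_obj \<beta> h y \<le> m0_obj \<beta> h x"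
    and my: "\<forall>z. m0_obj \<beta> h z \<le> m0_obj \<beta> h y"
  shows "x = y"
proof -
  have b: "\<beta> > 0" using hy unfolding hyp_def by simp
  have fx: "x = tanh (\<beta> * x + h)" and fy: "y = tanh (\<beta> * y + h)" using crit_fix[OF b] mx my by auto
  have pos: "x = y" if h0: "h > 0" and mx: "\<forall>y. m0_obj \<beta> h y \<le> m0_obj \<beta> h x"
    and my: "\<forall>z. m0_obj \<beta> h z \<le> m0_obj \<beta> h y" for h x y
  proof -
    have fx: "x = tanh (\<beta> * x + h)" and fy: "y = tanh (\<beta> * y + h)" using crit_fix[OF b] mx my by auto
    have "x > 0" "y > 0" using max_pos[OF b h0] mx my by auto
    then show ?thesis using uniq_pos[OF b h0 fx fy] uniq_pos[OF b h0 fy fx] by (cases x y rule: linorder_cases) auto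
  qed
  show ?thesis
  proof (cases "\<beta> \<le> 1")
    case True
    then show ?thesis using uniq_le1[OF b True fx fy] uniq_le1[OF b True fy fx]
      by (cases x y rule: linorder_cases) auto
  next
    case False
    then have "h \<noteq> 0" using hy unfolding hyp_def by simp
    then consider "h > 0" | "h < 0" by linarith
    then show ?thesis
    proof cases
      case 1 then show ?thesis using pos mx my by blast
    next
      case 2
      have "\<forall>z. m0_obj \<beta> (-h) z \<le> m0_obj \<beta> (-h) (-x)"
        using mx m0_obj_sym by (metis minus_minus)
      moreover have "\<forall>z. m0_obj \<beta> (-h) z \<le> m0_obj \<beta> (-h) (-y)"
        using my m0_obj_sym by (metis minus_minus)
      moreover have "-h > 0" using 2 by simp
      ultimately have "-x = -y" using pos by blast
      then show ?thesis by simp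
    qed
  qed
qed

lemma hyp_neg: "hyp \<beta> h \<Longrightarrow> hyp \<beta> (-h)"
  unfolding hyp_def by auto

lemma m0_max:
  assumes "hyp \<beta> h"
  shows "\<forall>y. m0_obj \<beta> h y \<le> m0_obj \<beta> h (m0 \<beta> h)"
proof -
  have b: "\<beta> > 0" using assms unfolding hyp_def by simp
  have "\<exists>!x. \<forall>y. m0_obj \<beta> h y \<le> m0_obj \<beta> h x"
    using obj_exists[OF b] uniq_max[OF assms] by blast
  then show ?thesis unfolding m0_def by (rule theI')
qed

lemma m0_eq:
  assumes "hyp \<beta> h" "\<forall>y. m0_obj \<beta> h y \<le> m0_obj \<beta> h x"
  shows "m0 \<beta> h = x"
  using uniq_max[OF assms(1) m0_max[OF assms(1)] assms(2)] .

lemma m0_neg: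
  assumes "hyp \<beta> h"
  shows "m0 \<beta> (-h) = - m0 \<beta> h"
proof (rule m0_eq[OF hyp_neg[OF assms]])
  show "\<forall>y. m0_obj \<beta> (- h) y \<le> m0_obj \<beta> (- h) (- m0 \<beta> h)"
    using m0_max[OF assms] m0_obj_sym by (metis minus_minus)
qed

lemma m0_fix:
  assumes "hyp \<beta> h"
  shows "m0 \<beta> h = tanh (\<beta> * m0 \<beta> h + h)"
  using crit_fix m0_max[OF assms] assms unfolding hyp_def by blast

lemma m0_abs:
  assumes "hyp \<beta> h"
  shows "\<bar>m0 \<beta> h\<bar> < 1"
  using m0_fix[OF assms] tanh_abs_lt1 by metis

lemma coercive:
  fixes \<beta> h :: real
  assumes "\<beta> > 0" "C \<ge> 0"
  shows "\<exists>X. X \<ge> 1 \<and> (\<forall>x. \<bar>x\<bar> \<ge> X \<longrightarrow> \<beta> * x^2 \<ge> C * \<bar>x\<bar> + C)"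
proof -
  define X where "X = 1 + 2 * C / \<beta>"
  have X1: "X \<ge> 1" unfolding X_def using assms by simp
  have "\<beta> * x^2 \<ge> C * \<bar>x\<bar> + C" if "\<bar>x\<bar> \<ge> X" for x
  proof -
    have ax: "\<bar>x\<bar> \<ge> 1" using that X1 by simp
    have "\<beta> * \<bar>x\<bar> \<ge> \<beta> * X" using that assms by (simp add: mult_left_mono)
    also have "\<beta> * X = \<beta> + 2 * C" unfolding X_def using assms by (simp add: field_simps)
    finally have "\<beta> * \<bar>x\<bar> \<ge> 2 * C" using assms by simp
    then have "\<bar>x\<bar> * (\<beta> * \<bar>x\<bar>) \<ge> \<bar>x\<bar> * (2 * C)" using ax by (simp add: mult_left_mono)
    moreover have "\<bar>x\<bar> * (2 * C) \<ge> C * \<bar>x\<bar> + C" using ax assms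
      by (simp add: algebra_simps) (metis mult.commute mult_left_mono mult_1_right)
    moreover have "\<bar>x\<bar> * (\<beta> * \<bar>x\<bar>) = \<beta> * x^2" by (simp add: power2_eq_square abs_mult_self_eq)
    ultimately show ?thesis by linarith
  qed
  then show ?thesis using X1 by blast
qed

lemma gap:
  assumes hy: "hyp \<beta> h" and r: "r > 0"
  shows "\<exists>\<gamma>>0. \<forall>x. \<bar>x - m0 \<beta> h\<bar> \<ge> r \<longrightarrow> m0_obj \<beta> h x \<le> m0_obj \<beta> h (m0 \<beta> h) - \<gamma>"
proof -
  let ?m = "m0 \<beta> h" let ?f = "m0_obj \<beta> h"
  have b: "\<beta> > 0" using hy unfolding hyp_def by simp
  have mx: "\<forall>y. ?f y \<le> ?f ?m" using m0_max[OF hy] .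
  obtain X where X: "X \<ge> 1" "\<And>x. \<bar>x\<bar> \<ge> X \<Longrightarrow> \<beta> * x^2 \<ge> (2 * \<beta> + 2 * \<bar>h\<bar> + 2) * \<bar>x\<bar> + (2 * \<beta> + 2 * \<bar>h\<bar> + 2)"
    using coercive[OF b, of "2 * \<beta> + 2 * \<bar>h\<bar> + 2"] b by auto
  have far: "?f x \<le> ?f ?m - 1" if "\<bar>x\<bar> \<ge> X" for x
  proof -
    have "?f x \<le> ln 2 + \<beta> * \<bar>x\<bar> + \<bar>h\<bar> - \<beta> * x^2 / 2" by (rule obj_upper[OF b])
    also have "\<dots> \<le> ln 2 - 1"
    proof -
      have A: "\<beta> * x^2 \<ge> (2 * \<beta> + 2 * \<bar>h\<bar> + 2) * \<bar>x\<bar> + (2 * \<beta> + 2 * \<bar>h\<bar> + 2)" using X(2)[OF that] .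
      have B: "(2 * \<beta> + 2 * \<bar>h\<bar> + 2) * \<bar>x\<bar> = 2 * (\<beta> * \<bar>x\<bar>) + 2 * (\<bar>h\<bar> * \<bar>x\<bar>) + 2 * \<bar>x\<bar>"
        by (simp add: algebra_simps)
      have C: "\<bar>h\<bar> * \<bar>x\<bar> \<ge> 0" by simp
      show ?thesis using A B C b by linarith
    qed
    also have "ln 2 \<le> ?f 0" by (rule obj_ge0)
    also have "?f 0 \<le> ?f ?m" using mx by blast
    finally show ?thesis by simp
  qed
  define K where "K = {-X..X} \<inter> {x. r \<le> \<bar>x - ?m\<bar>}"
  have cK: "compact K" unfolding K_def
    by (intro compact_Int_closed compact_Icc closed_Collect_le continuous_intros)
  have cont: "continuous_on K ?f"
    by (intro continuous_at_imp_continuous_on ballI DERIV_isCont[OF deriv_obj])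
  show ?thesis
  proof (cases "K = {}")
    case True
    have "?f x \<le> ?f ?m - 1" if "\<bar>x - ?m\<bar> \<ge> r" for x
    proof -
      have "x \<notin> K" using True by simp
      then have "\<bar>x\<bar> \<ge> X" using that unfolding K_def by auto
      then show ?thesis by (rule far)
    qed
    then show ?thesis by (intro exI[of _ 1]) auto
  next
    case False
    obtain xs where xs: "xs \<in> K" "\<forall>y\<in>K. ?f y \<le> ?f xs"
      using continuous_attains_sup[OF cK False cont] by blast
    have "?f xs < ?f ?m"
    proof (rule ccontr)
      assume "\<not> ?f xs < ?f ?m"
      then have "\<forall>y. ?f y \<le> ?f xs" using mx by (meson not_less order_trans)
      then have "?m = xs" by (rule m0_eq[OF hy])
      then show False using xs(1) r unfolding K_def by auto
    qed
    define \<gamma> where "\<gamma> = min 1 (?f ?m - ?f xs)"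
    have "\<gamma> > 0" unfolding \<gamma>_def using \<open>?f xs < ?f ?m\<close> by simp
    moreover have "?f x \<le> ?f ?m - \<gamma>" if "\<bar>x - ?m\<bar> \<ge> r" for x
    proof (cases "\<bar>x\<bar> \<ge> X")
      case True then show ?thesis using far[OF True] unfolding \<gamma>_def by linarith
    next
      case False
      then have "x \<in> K" using that unfolding K_def by auto
      then have "?f x \<le> ?f xs" using xs by blast
      then show ?thesis unfolding \<gamma>_def by linarith
    qed
    ultimately show ?thesis by blast
  qed
qed

lemma abs_mult_le: "\<bar>a\<bar> \<le> A \<Longrightarrow> \<bar>b\<bar> \<le> B \<Longrightarrow> \<bar>a * b\<bar> \<le> A * (B::real)"
  by (simp add: abs_mult mult_mono')

lemma incr:
  "m0_obj (\<beta> + \<delta> * u) (h + \<delta> * v) x - m0_obj \<beta> h x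
     \<le> \<delta> * ((u * x + v) * tanh ((\<beta> + \<delta> * u) * x + (h + \<delta> * v)) - u * x^2 / 2)"
proof -
  have "ln (cosh ((\<beta> + \<delta> * u) * x + (h + \<delta> * v))) - ln (cosh (\<beta> * x + h))
        \<le> (((\<beta> + \<delta> * u) * x + (h + \<delta> * v)) - (\<beta> * x + h)) * tanh ((\<beta> + \<delta> * u) * x + (h + \<delta> * v))"
    by (rule lncosh_diff)
  also have "((\<beta> + \<delta> * u) * x + (h + \<delta> * v)) - (\<beta> * x + h) = \<delta> * (u * x + v)"
    by (simp add: algebra_simps)
  finally have H: "ln (cosh ((\<beta> + \<delta> * u) * x + (h + \<delta> * v))) - ln (cosh (\<beta> * x + h))
     \<le> \<delta> * (u * x + v) * tanh ((\<beta> + \<delta> * u) * x + (h + \<delta> * v))" .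
  have E1: "m0_obj (\<beta> + \<delta> * u) (h + \<delta> * v) x - m0_obj \<beta> h x =
      (ln (cosh ((\<beta> + \<delta> * u) * x + (h + \<delta> * v))) - ln (cosh (\<beta> * x + h))) - \<delta> * (u * x^2 / 2)"
    unfolding m0_obj_def by (simp add: algebra_simps)
  have E2: "\<delta> * ((u * x + v) * tanh ((\<beta> + \<delta> * u) * x + (h + \<delta> * v)) - u * x^2 / 2)
     = \<delta> * (u * x + v) * tanh ((\<beta> + \<delta> * u) * x + (h + \<delta> * v)) - \<delta> * (u * x^2 / 2)"
    by (simp add: algebra_simps)
  show ?thesis unfolding E1 E2 using H by linarith
qed

lemma perturb:
  assumes hy: "hyp \<beta> h" and u: "\<bar>u\<bar> \<le> 1" and v: "\<bar>v\<bar> \<le> 1" and eta: "\<eta> > 0"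
  shows "\<exists>\<delta>0>0. \<forall>\<delta>. 0 < \<delta> \<and> \<delta> < \<delta>0 \<longrightarrow> (\<forall>x. m0_obj (\<beta> + \<delta> * u) (h + \<delta> * v) x
            \<le> m0_obj \<beta> h (m0 \<beta> h) + \<delta> * (u * (m0 \<beta> h)^2 / 2 + v * m0 \<beta> h + \<eta>))"
proof -
  define m where "m = m0 \<beta> h"
  define \<Phi> where "\<Phi> = m0_obj \<beta> h m"
  define D where "D = u * m^2 / 2 + v * m"
  define a0 where "a0 = \<beta> * m + h"
  have b: "\<beta> > 0" using hy unfolding hyp_def by simp
  have mfix: "m = tanh a0" unfolding m_def a0_def using m0_fix[OF hy] .
  have mabs: "\<bar>m\<bar> \<le> 1" unfolding m_def using m0_abs[OF hy] by simp
  have mx: "\<forall>y. m0_obj \<beta> h y \<le> \<Phi>" unfolding \<Phi>_def m_def using m0_max[OF hy] .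
  have Phi0: "\<Phi> \<ge> ln 2" using mx obj_ge0[of \<beta> h] by (meson order_trans)
  have Dabs: "\<bar>D\<bar> \<le> 3/2"
  proof -
    have "\<bar>m^2\<bar> \<le> 1" using mabs abs_square_le_1[of m] by simp
    then have "\<bar>u * m^2\<bar> \<le> 1 * 1" using u by (intro abs_mult_le)
    then have "\<bar>u * m^2 / 2\<bar> \<le> 1 * 1 / 2" by simp
    moreover have "\<bar>v * m\<bar> \<le> 1 * 1" using u v mabs by (intro abs_mult_le)
    ultimately show ?thesis unfolding D_def by linarith
  qed
  define C where "C = 2 * \<beta> + \<bar>h\<bar> + 2"
  obtain X where X: "X \<ge> 1" "\<And>x. \<bar>x\<bar> \<ge> X \<Longrightarrow> (\<beta>/4) * x^2 \<ge> C * \<bar>x\<bar> + C"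
    using coercive[of "\<beta>/4" C] b unfolding C_def by auto
  define r where "r = min 1 (\<eta> / (2 * (3 + 2 * \<beta>)))"
  have r0: "r > 0" unfolding r_def using eta b by simp
  have r1: "r \<le> 1" unfolding r_def by simp
  have r2: "r * (5/2 + 2 * \<beta>) \<le> \<eta> / 2"
  proof -
    have "r \<le> \<eta> / (2 * (3 + 2 * \<beta>))" unfolding r_def by simp
    then have "r * (5/2 + 2 * \<beta>) \<le> \<eta> / (2 * (3 + 2 * \<beta>)) * (5/2 + 2 * \<beta>)"
      using b by (intro mult_right_mono) auto
    also have "\<dots> \<le> \<eta> / (2 * (3 + 2 * \<beta>)) * (3 + 2 * \<beta>)"
      using b eta by (intro mult_left_mono) auto
    also have "\<dots> = \<eta> / 2" using b by (simp add: field_simps)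
    finally show ?thesis .
  qed
  obtain \<gamma> where g: "\<gamma> > 0" "\<And>x. \<bar>x - m\<bar> \<ge> r \<Longrightarrow> m0_obj \<beta> h x \<le> \<Phi> - \<gamma>"
    using gap[OF hy r0] unfolding m_def \<Phi>_def by blast
  define K where "K = X + 1 + X^2 / 2"
  have K0: "K \<ge> 0" unfolding K_def using X by simp
  define \<delta>0 where "\<delta>0 = min (min (\<beta>/2) (1/2)) (min (\<gamma> / (K + 3/2)) (\<eta> / 12))"
  have d0: "\<delta>0 > 0" unfolding \<delta>0_def using b g K0 eta by simp
  have main: "m0_obj (\<beta> + \<delta> * u) (h + \<delta> * v) x \<le> \<Phi> + \<delta> * (D + \<eta>)" if dpos: "0 < \<delta>" and dlt: "\<delta> < \<delta>0" for \<delta> x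
  proof -
    define b' where "b' = \<beta> + \<delta> * u"
    define h' where "h' = h + \<delta> * v"
    define br where "br = (u * x + v) * tanh (b' * x + h') - u * x^2 / 2"
    have db: "\<delta> \<le> \<beta>/2" "\<delta> \<le> 1/2" "\<delta> \<le> \<gamma> / (K + 3/2)" "\<delta> \<le> \<eta> / 12"
      using dlt unfolding \<delta>0_def by auto
    have du: "\<bar>\<delta> * u\<bar> \<le> \<delta>" using u dpos by (simp add: abs_mult mult_left_le)
    have dv: "\<bar>\<delta> * v\<bar> \<le> \<delta>" using v dpos by (simp add: abs_mult mult_left_le)
    have b'lo: "b' \<ge> \<beta> / 2" unfolding b'_def using du db by linarith
    have b'hi: "b' \<le> 2 * \<beta>" unfolding b'_def using du db by linarith
    have h'hi: "\<bar>h'\<bar> \<le> \<bar>h\<bar> + 1" unfolding h'_def using dv db by linarith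
    have b'pos: "b' > 0" using b'lo b by linarith
    have inc: "m0_obj b' h' x \<le> m0_obj \<beta> h x + \<delta> * br"
      using incr[of \<beta> \<delta> u h v x] unfolding b'_def h'_def br_def by simp
    have rhs: "\<Phi> + \<delta> * (D + \<eta>) \<ge> ln 2 - 3/4"
    proof -
      have "\<delta> * D \<ge> - (\<delta> * (3/2))" using mult_left_mono[of "-3/2" D \<delta>] Dabs dpos by simp
      moreover have "\<delta> * \<eta> \<ge> 0" using dpos eta by simp
      ultimately show ?thesis using Phi0 db(2) by (simp add: distrib_left)
    qed
    show ?thesis
    proof (cases "\<bar>x\<bar> \<ge> X")
      case True
      have "m0_obj b' h' x \<le> ln 2 + b' * \<bar>x\<bar> + \<bar>h'\<bar> - b' * x^2 / 2" by (rule obj_upper[OF b'pos])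
      also have "\<dots> \<le> ln 2 - 1"
      proof -
        have A: "(\<beta>/4) * x^2 \<ge> C * \<bar>x\<bar> + C" using X(2)[OF True] .
        have B: "b' * x^2 / 2 \<ge> (\<beta>/4) * x^2" using mult_right_mono[OF b'lo, of "x^2"] by simp
        have E: "b' * \<bar>x\<bar> \<le> 2 * \<beta> * \<bar>x\<bar>" using b'hi by (simp add: mult_right_mono)
        have F: "C * \<bar>x\<bar> = 2 * \<beta> * \<bar>x\<bar> + (\<bar>h\<bar> + 2) * \<bar>x\<bar>" unfolding C_def by (simp add: algebra_simps)
        have G: "(\<bar>h\<bar> + 2) * \<bar>x\<bar> \<ge> 0" by simp
        show ?thesis using A B E F G h'hi b unfolding C_def by linarith
      qed
      finally show ?thesis using rhs unfolding b'_def h'_def by linarith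
    next
      case False
      show ?thesis
      proof (cases "\<bar>x - m\<bar> \<ge> r")
        case True
        have "br \<le> K"
        proof -
          have "\<bar>u * x + v\<bar> \<le> X + 1"
          proof -
            have "\<bar>u * x\<bar> \<le> 1 * X" using u False by (intro abs_mult_le) auto
            then show ?thesis using v by linarith
          qed
          then have P1: "\<bar>(u * x + v) * tanh (b' * x + h')\<bar> \<le> (X + 1) * 1"
            using tanh_abs_lt1 by (intro abs_mult_le) (auto intro: less_imp_le)
          have P2: "\<bar>u * x^2 / 2\<bar> \<le> 1 * X^2 / 2"
          proof -
            have "\<bar>x\<bar> \<le> \<bar>X\<bar>" using False X(1) by simp
            then have "x^2 \<le> X^2" by (simp add: abs_le_square_iff)
            then have "\<bar>u * x^2\<bar> \<le> 1 * X^2" using u by (intro abs_mult_le) auto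
            then show ?thesis by simp
          qed
          have A1: "(u * x + v) * tanh (b' * x + h') \<le> X + 1"
            using order_trans[OF abs_ge_self P1] by simp
          have A2: "- (u * x^2 / 2) \<le> X^2 / 2"
            using order_trans[OF abs_ge_minus_self P2] by simp
          show ?thesis unfolding br_def K_def using A1 A2 by linarith
        qed
        have "\<delta> * br \<le> \<delta> * K" using \<open>br \<le> K\<close> dpos by simp
        moreover have "\<delta> * (K + 3/2) \<le> \<gamma>"
          using db(3) K0 by (simp add: le_divide_eq mult.commute)
        moreover have "\<delta> * D \<ge> - (\<delta> * (3/2))" using mult_left_mono[of "-3/2" D \<delta>] Dabs dpos by simp
        moreover have "\<delta> * \<eta> \<ge> 0" using dpos eta by simp
        moreover have "m0_obj \<beta> h x \<le> \<Phi> - \<gamma>" using g(2)[OF True] .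
        ultimately show ?thesis using inc unfolding b'_def h'_def by (simp add: algebra_simps)
      next
        case False
        then have xr: "\<bar>x - m\<bar> < r" by simp
        have xa: "\<bar>x\<bar> \<le> 2" using xr r1 mabs by linarith
        have T1: "\<bar>u * (x - m) * tanh (b' * x + h')\<bar> \<le> 1 * r * 1"
          using u xr tanh_abs_lt1 by (intro abs_mult_le) (auto intro: less_imp_le)
        have ab: "\<bar>(b' * x + h') - a0\<bar> \<le> \<beta> * r + 3 * \<delta>"
        proof -
          have eq: "(b' * x + h') - a0 = \<beta> * (x - m) + \<delta> * (u * x + v)"
            unfolding b'_def h'_def a0_def by (simp add: algebra_simps)
          have "\<bar>\<beta> * (x - m)\<bar> \<le> \<beta> * r" using b xr by (simp add: abs_mult)
          moreover have "\<bar>u * x + v\<bar> \<le> 3"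
          proof -
            have "\<bar>u * x\<bar> \<le> 1 * 2" using u xa by (intro abs_mult_le)
            then show ?thesis using v by linarith
          qed
          then have "\<bar>\<delta> * (u * x + v)\<bar> \<le> \<delta> * 3" using dpos by (simp add: abs_mult)
          ultimately show ?thesis unfolding eq by linarith
        qed
        have T2: "\<bar>(u * m + v) * (tanh (b' * x + h') - tanh a0)\<bar> \<le> 2 * (\<beta> * r + 3 * \<delta>)"
        proof (intro abs_mult_le)
          have "\<bar>u * m\<bar> \<le> 1 * 1" using u mabs by (intro abs_mult_le)
          then show "\<bar>u * m + v\<bar> \<le> 2" using v by linarith
          show "\<bar>tanh (b' * x + h') - tanh a0\<bar> \<le> \<beta> * r + 3 * \<delta>"
            using tanh_lip[of "b' * x + h'" a0] ab by linarith
        qed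
        have T3: "\<bar>u * (x - m) * (x + m) / 2\<bar> \<le> 1 * r * 3 / 2"
        proof -
          have "\<bar>x + m\<bar> \<le> 3" using xa mabs by linarith
          then have "\<bar>u * (x - m) * (x + m)\<bar> \<le> 1 * r * 3" using u xr
            by (intro abs_mult_le) (auto intro: less_imp_le)
          then show ?thesis by simp
        qed
        have eqbr: "br - D = u * (x - m) * tanh (b' * x + h') + (u * m + v) * (tanh (b' * x + h') - tanh a0)
                      - u * (x - m) * (x + m) / 2"
          unfolding br_def D_def by (simp add: mfix[symmetric] power2_eq_square field_simps)
        have "br - D \<le> r + 2 * (\<beta> * r + 3 * \<delta>) + r * 3 / 2"
          using T1 T2 T3 abs_ge_self[of "u * (x - m) * tanh (b' * x + h')"]
            abs_ge_self[of "(u * m + v) * (tanh (b' * x + h') - tanh a0)"] abs_ge_minus_self[of "u * (x - m) * (x + m) / 2"]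
          unfolding eqbr by linarith
        also have "\<dots> = r * (5/2 + 2 * \<beta>) + 6 * \<delta>" by (simp add: algebra_simps)
        also have "\<dots> \<le> \<eta>" using r2 db(4) by linarith
        finally have "br \<le> D + \<eta>" by simp
        then have "\<delta> * br \<le> \<delta> * (D + \<eta>)" using dpos by simp
        moreover have "m0_obj \<beta> h x \<le> \<Phi>" using mx by blast
        ultimately show ?thesis using inc unfolding b'_def h'_def by linarith
      qed
    qed
  qed
  show ?thesis
    using d0 main unfolding \<Phi>_def m_def D_def by blast
qed

definition cwE :: "real \<Rightarrow> real \<Rightarrow> nat \<Rightarrow> ((nat \<Rightarrow> real) \<Rightarrow> real) \<Rightarrow> real" where
  "cwE \<beta> h N f = (\<Sum>s\<in>spins N. cw_weight \<beta> h N s * f s) / cw_z \<beta> h N"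

definition mag :: "nat \<Rightarrow> (nat \<Rightarrow> real) \<Rightarrow> real" where
  "mag N s = (\<Sum>i<N. s i) / real N"

lemma spins_ne: "spins N \<noteq> {}"
  unfolding spins_def by (simp add: PiE_eq_empty_iff)

lemma cw_weight_pos: "cw_weight \<beta> h N s > 0"
  unfolding cw_weight_def by simp

lemma cw_z_pos: "cw_z \<beta> h N > 0"
  unfolding cw_z_def using spins_ne finite_spins cw_weight_pos by (intro sum_pos) auto

lemma cwE_const: "cwE \<beta> h N (\<lambda>_. c) = c"
  unfolding cwE_def cw_z_def using cw_z_pos[of \<beta> h N]
  by (simp add: sum_distrib_right[symmetric] cw_z_def)

lemma cw_z_Zpart: "cw_z \<beta> h N = Zpart N (\<lambda>\<mu> i. 1) \<beta> h 1"
  unfolding cw_z_def Zpart_def cw_weight_def by simp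

lemma pm1_ones: "pm1 1 N (\<lambda>\<mu> i. 1)"
  unfolding pm1_def by simp

lemma Gemp_ones: "N \<ge> 1 \<Longrightarrow> Gemp 1 N (\<lambda>\<mu> i. 1) \<beta> h p = m0_obj \<beta> h (p 0)"
  unfolding Gemp_def m0_obj_def by simp

lemma SUP_PiE1: "(SUP p\<in>({..<1::nat} \<rightarrow>\<^sub>E (UNIV::real set)). g (p 0)) = (SUP x. g x)"
proof -
  have "(\<lambda>p. p 0) ` ({..<1::nat} \<rightarrow>\<^sub>E (UNIV::real set)) = UNIV"
  proof (intro set_eqI iffI)
    fix x :: real
    assume "x \<in> UNIV"
    have "(\<lambda>i\<in>{..<1::nat}. x) \<in> {..<1} \<rightarrow>\<^sub>E UNIV" by simp
    moreover have "x = (\<lambda>i\<in>{..<1::nat}. x) 0" by simp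
    ultimately show "x \<in> (\<lambda>p. p 0) ` ({..<1::nat} \<rightarrow>\<^sub>E (UNIV::real set))" by blast
  qed auto
  then show ?thesis by (metis image_image)
qed

lemma phi_conv:
  assumes "\<beta> > 0"
  shows "(\<lambda>N. ln (cw_z \<beta> h N) / real N) \<longlonglongrightarrow> (SUP x. m0_obj \<beta> h x)"
proof -
  let ?F = "SUP x. m0_obj \<beta> h x"
  have bnd: "\<bar>ln (cw_z \<beta> h N) / real N - ?F\<bar> \<le> \<beta> / (2 * real N) + ln (2 * real N + 1) / real N" if "N \<ge> 1" for N
  proof -
    have "(SUP p\<in>({..<1} \<rightarrow>\<^sub>E (UNIV::real set)). Gemp 1 N (\<lambda>\<mu> i. 1) \<beta> h p)
       = (SUP p\<in>({..<1::nat} \<rightarrow>\<^sub>E (UNIV::real set)). m0_obj \<beta> h (p 0))"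
      using Gemp_ones[OF that] by (intro arg_cong[where f=Sup] image_cong) auto
    also have "\<dots> = ?F" by (rule SUP_PiE1)
    finally have F: "(SUP p\<in>({..<1} \<rightarrow>\<^sub>E (UNIV::real set)). Gemp 1 N (\<lambda>\<mu> i. 1) \<beta> h p) = ?F" .
    note L = laplace[OF that assms pm1_ones, of h, unfolded F, folded cw_z_Zpart]
    have "ln (2 * real N + 1) \<ge> 0" by simp
    then have "ln (2 * real N + 1) / real N \<ge> 0" by simp
    moreover have "\<beta> / (2 * real N) \<ge> 0" using assms by simp
    ultimately show ?thesis using L(2,3) by (simp add: abs_le_iff)
  qed
  have lim0: "(\<lambda>N. \<beta> / (2 * real N) + ln (2 * real N + 1) / real N) \<longlonglongrightarrow> 0"
    by real_asymp
  have "(\<lambda>N. ln (cw_z \<beta> h N) / real N - ?F) \<longlonglongrightarrow> 0"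
  proof (rule Lim_null_comparison[where g = "\<lambda>N. \<beta> / (2 * real N) + ln (2 * real N + 1) / real N"])
    show "\<forall>\<^sub>F N in sequentially. norm (ln (cw_z \<beta> h N) / real N - ?F) \<le> \<beta> / (2 * real N) + ln (2 * real N + 1) / real N"
      using bnd unfolding eventually_sequentially by auto
  qed (rule lim0)
  then show ?thesis by (simp add: LIM_zero_iff)
qed

lemma jensen:
  assumes "finite A" "A \<noteq> {}" "\<And>a. a \<in> A \<Longrightarrow> w a > (0::real)"
  shows "(\<Sum>a\<in>A. w a * exp (X a)) \<ge> (\<Sum>a\<in>A. w a) * exp ((\<Sum>a\<in>A. w a * X a) / (\<Sum>a\<in>A. w a))"
proof -
  define W where "W = (\<Sum>a\<in>A. w a)"
  have W: "W > 0" unfolding W_def using assms by (intro sum_pos) auto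
  define c where "c = (\<Sum>a\<in>A. w a * X a) / W"
  have "w a * exp (X a) \<ge> w a * (exp c * (1 + (X a - c)))" if "a \<in> A" for a
  proof -
    have "exp (X a - c) \<ge> 1 + (X a - c)" by (rule exp_ge_add_one_self)
    then have "exp c * exp (X a - c) \<ge> exp c * (1 + (X a - c))" by simp
    then have "exp (X a) \<ge> exp c * (1 + (X a - c))" by (simp add: mult_exp_exp)
    then show ?thesis using assms(3)[OF that] by simp
  qed
  then have "(\<Sum>a\<in>A. w a * exp (X a)) \<ge> (\<Sum>a\<in>A. w a * (exp c * (1 + (X a - c))))"
    by (intro sum_mono) auto
  also have "(\<Sum>a\<in>A. w a * (exp c * (1 + (X a - c)))) = exp c * (W + (\<Sum>a\<in>A. w a * X a) - c * W)"
    unfolding W_def by (simp add: algebra_simps sum.distrib sum_subtractf sum_distrib_left sum_distrib_right)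
  also have "(\<Sum>a\<in>A. w a * X a) = c * W" unfolding c_def using W by simp
  finally show ?thesis unfolding c_def W_def by (simp add: mult.commute)
qed

definition Qn :: "nat \<Rightarrow> (nat \<Rightarrow> real) \<Rightarrow> real" where
  "Qn N s = (\<Sum>j<N. \<Sum>i<j. s i * s j) / real N"

lemma cw_weight_shift:
  "cw_weight (\<beta> + \<delta> * u) (h + \<delta> * v) N s = cw_weight \<beta> h N s * exp (\<delta> * (u * Qn N s + v * (\<Sum>i<N. s i)))"
  unfolding cw_weight_def Qn_def by (simp add: mult_exp_exp algebra_simps add_divide_distrib)

lemma jensen_cw:
  "ln (cw_z (\<beta> + \<delta> * u) (h + \<delta> * v) N) - ln (cw_z \<beta> h N)
     \<ge> \<delta> * cwE \<beta> h N (\<lambda>s. u * Qn N s + v * (\<Sum>i<N. s i))"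
proof -
  let ?w = "cw_weight \<beta> h N" let ?Y = "\<lambda>s. u * Qn N s + v * (\<Sum>i<N. s i)"
  have "cw_z (\<beta> + \<delta> * u) (h + \<delta> * v) N = (\<Sum>s\<in>spins N. ?w s * exp (\<delta> * ?Y s))"
    unfolding cw_z_def cw_weight_shift ..
  also have "\<dots> \<ge> (\<Sum>s\<in>spins N. ?w s) * exp ((\<Sum>s\<in>spins N. ?w s * (\<delta> * ?Y s)) / (\<Sum>s\<in>spins N. ?w s))"
    using finite_spins spins_ne cw_weight_pos by (intro jensen) auto
  finally have J: "cw_z (\<beta> + \<delta> * u) (h + \<delta> * v) N \<ge> cw_z \<beta> h N * exp (\<delta> * cwE \<beta> h N ?Y)"
    unfolding cwE_def cw_z_def by (simp add: sum_distrib_left mult_ac)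
  have "ln (cw_z \<beta> h N * exp (\<delta> * cwE \<beta> h N ?Y)) \<le> ln (cw_z (\<beta> + \<delta> * u) (h + \<delta> * v) N)"
    using J cw_z_pos by (subst ln_le_cancel_iff) auto
  then show ?thesis using cw_z_pos[of \<beta> h N] by (simp add: ln_mult)
qed

lemma cwE_cong: "(\<And>s. s \<in> spins N \<Longrightarrow> f s = g s) \<Longrightarrow> cwE \<beta> h N f = cwE \<beta> h N g"
  unfolding cwE_def by (simp cong: sum.cong)

lemma cwE_lin: "cwE \<beta> h N (\<lambda>s. a * f s + b * g s + c) = a * cwE \<beta> h N f + b * cwE \<beta> h N g + c"
proof -
  have z: "cw_z \<beta> h N \<noteq> 0" using cw_z_pos[of \<beta> h N] by simp
  have "(\<Sum>s\<in>spins N. cw_weight \<beta> h N s * (a * f s + b * g s + c))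
      = a * (\<Sum>s\<in>spins N. cw_weight \<beta> h N s * f s) + b * (\<Sum>s\<in>spins N. cw_weight \<beta> h N s * g s) + c * cw_z \<beta> h N"
    unfolding cw_z_def by (simp add: algebra_simps sum.distrib sum_distrib_left)
  then show ?thesis unfolding cwE_def using z by (simp add: field_simps)
qed

lemma Qn_spins:
  assumes "s \<in> spins N" "N \<ge> 1"
  shows "Qn N s = (real N * (mag N s)^2 - 1) / 2"
proof -
  have "(\<Sum>j<N. \<Sum>i<j. s i * s j) = ((\<Sum>i<N. s i)^2 - (\<Sum>i<N. (s i)^2)) / 2" by (rule pair_sum)
  also have "(\<Sum>i<N. (s i)^2) = real N" using spins_sq[OF assms(1)] by simp
  finally show ?thesis unfolding Qn_def mag_def using assms(2)
    by (simp add: field_simps power2_eq_square)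
qed

definition AN :: "real \<Rightarrow> real \<Rightarrow> real \<Rightarrow> real \<Rightarrow> nat \<Rightarrow> real" where
  "AN \<beta> h u v N = u * (cwE \<beta> h N (\<lambda>s. (mag N s)^2) - 1 / real N) / 2 + v * cwE \<beta> h N (mag N)"

lemma jensen_A:
  assumes "N \<ge> 1"
  shows "\<delta> * AN \<beta> h u v N \<le> ln (cw_z (\<beta> + \<delta> * u) (h + \<delta> * v) N) / real N - ln (cw_z \<beta> h N) / real N"
proof -
  have Nr: "real N > 0" using assms by simp
  have "cwE \<beta> h N (\<lambda>s. u * Qn N s + v * (\<Sum>i<N. s i))
      = cwE \<beta> h N (\<lambda>s. (u * real N / 2) * (mag N s)^2 + (v * real N) * mag N s + (- u / 2))"
  proof (rule cwE_cong)
    fix s assume s: "s \<in> spins N"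
    show "u * Qn N s + v * (\<Sum>i<N. s i) = (u * real N / 2) * (mag N s)^2 + (v * real N) * mag N s + (- u / 2)"
      unfolding Qn_spins[OF s assms] mag_def using Nr by (simp add: field_simps power2_eq_square)
  qed
  also have "\<dots> = real N * AN \<beta> h u v N"
    unfolding cwE_lin AN_def using Nr by (simp add: field_simps)
  finally have "\<delta> * (real N * AN \<beta> h u v N) \<le> ln (cw_z (\<beta> + \<delta> * u) (h + \<delta> * v) N) - ln (cw_z \<beta> h N)"
    using jensen_cw[where \<beta>=\<beta> and \<delta>=\<delta> and u=u and h=h and v=v and N=N] by simp
  then show ?thesis using Nr by (simp add: field_simps)
qed

lemma AN_neg: "AN \<beta> h (-u) (-v) N = - AN \<beta> h u v N"
  unfolding AN_def by (metis (no_types) minus_add_distrib minus_divide_left mult_minus_left)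

lemma Phi_SUP:
  assumes "hyp \<beta> h"
  shows "(SUP x. m0_obj \<beta> h x) = m0_obj \<beta> h (m0 \<beta> h)"
  using m0_max[OF assms] by (intro cSup_eq_maximum) auto

lemma SUP_le_bound: "(\<And>x. g x \<le> (B::real)) \<Longrightarrow> (SUP x. g x) \<le> B"
  by (rule cSUP_least) auto

lemma moment_conv:
  assumes hy: "hyp \<beta> h" and u: "\<bar>u\<bar> \<le> 1" and v: "\<bar>v\<bar> \<le> 1"
  shows "(\<lambda>N. AN \<beta> h u v N) \<longlonglongrightarrow> u * (m0 \<beta> h)^2 / 2 + v * m0 \<beta> h"
proof -
  define m where "m = m0 \<beta> h"
  define D where "D = u * m^2 / 2 + v * m"
  define \<Phi> where "\<Phi> = m0_obj \<beta> h m"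
  have b: "\<beta> > 0" using hy unfolding hyp_def by simp
  have key: "\<forall>\<^sub>F N in sequentially. \<bar>AN \<beta> h u v N - D\<bar> < \<epsilon>" if e: "\<epsilon> > 0" for \<epsilon>
  proof -
    define \<eta> where "\<eta> = \<epsilon> / 4"
    have eta: "\<eta> > 0" unfolding \<eta>_def using e by simp
    obtain d1 where d1: "d1 > 0" "\<And>\<delta> x. 0 < \<delta> \<Longrightarrow> \<delta> < d1 \<Longrightarrow> m0_obj (\<beta> + \<delta> * u) (h + \<delta> * v) x \<le> \<Phi> + \<delta> * (D + \<eta>)"
      using perturb[OF hy u v eta] unfolding \<Phi>_def m_def D_def by blast
    have u': "\<bar>-u\<bar> \<le> 1" and v': "\<bar>-v\<bar> \<le> 1" using u v by auto
    obtain d2 where d2: "d2 > 0" "\<And>\<delta> x. 0 < \<delta> \<Longrightarrow> \<delta> < d2 \<Longrightarrow> m0_obj (\<beta> + \<delta> * (-u)) (h + \<delta> * (-v)) x \<le> \<Phi> + \<delta> * (-D + \<eta>)"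
      using perturb[OF hy u' v' eta] unfolding \<Phi>_def m_def D_def by (auto simp: algebra_simps)
    define \<delta> where "\<delta> = min (min d1 d2) \<beta> / 2"
    have dp: "\<delta> > 0" unfolding \<delta>_def using d1 d2 b by simp
    have dl: "\<delta> < d1" "\<delta> < d2" "\<delta> \<le> \<beta> / 2" unfolding \<delta>_def using d1 d2 b by auto
    define Pp where "Pp = (SUP x. m0_obj (\<beta> + \<delta> * u) (h + \<delta> * v) x)"
    define Pm where "Pm = (SUP x. m0_obj (\<beta> + \<delta> * (-u)) (h + \<delta> * (-v)) x)"
    have Pp: "Pp \<le> \<Phi> + \<delta> * (D + \<eta>)" unfolding Pp_def using d1(2)[OF dp dl(1)] by (rule SUP_le_bound)
    have Pm: "Pm \<le> \<Phi> + \<delta> * (-D + \<eta>)" unfolding Pm_def using d2(2)[OF dp dl(2)] by (rule SUP_le_bound)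
    have du: "\<bar>\<delta> * u\<bar> \<le> \<delta>" using u dp by (simp add: abs_mult mult_left_le)
    have bp: "\<beta> + \<delta> * u > 0" "\<beta> + \<delta> * (-u) > 0" using du dl(3) b by auto
    have P0: "(SUP x. m0_obj \<beta> h x) = \<Phi>" unfolding \<Phi>_def m_def by (rule Phi_SUP[OF hy])
    have c0: "(\<lambda>N. ln (cw_z \<beta> h N) / real N) \<longlonglongrightarrow> \<Phi>" using phi_conv[OF b, of h] unfolding P0 .
    have cp: "(\<lambda>N. ln (cw_z (\<beta> + \<delta> * u) (h + \<delta> * v) N) / real N) \<longlonglongrightarrow> Pp"
      unfolding Pp_def by (rule phi_conv[OF bp(1)])
    have cm: "(\<lambda>N. ln (cw_z (\<beta> + \<delta> * (-u)) (h + \<delta> * (-v)) N) / real N) \<longlonglongrightarrow> Pm"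
      unfolding Pm_def by (rule phi_conv[OF bp(2)])
    have de: "\<delta> * \<eta> > 0" using dp eta by simp
    have e0: "\<forall>\<^sub>F N in sequentially. \<bar>ln (cw_z \<beta> h N) / real N - \<Phi>\<bar> < \<delta> * \<eta>"
      using c0 de unfolding tendsto_iff dist_real_def by blast
    have ep: "\<forall>\<^sub>F N in sequentially. \<bar>ln (cw_z (\<beta> + \<delta> * u) (h + \<delta> * v) N) / real N - Pp\<bar> < \<delta> * \<eta>"
      using cp de unfolding tendsto_iff dist_real_def by blast
    have em: "\<forall>\<^sub>F N in sequentially. \<bar>ln (cw_z (\<beta> + \<delta> * (-u)) (h + \<delta> * (-v)) N) / real N - Pm\<bar> < \<delta> * \<eta>"
      using cm de unfolding tendsto_iff dist_real_def by blast
    have e1: "\<forall>\<^sub>F N in sequentially. N \<ge> 1" using eventually_ge_at_top[of 1] by simp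
    show ?thesis
    proof (rule eventually_mono[OF eventually_conj[OF e1 eventually_conj[OF e0 eventually_conj[OF ep em]]]])
      fix N assume H: "1 \<le> N \<and> \<bar>ln (cw_z \<beta> h N) / real N - \<Phi>\<bar> < \<delta> * \<eta> \<and>
          \<bar>ln (cw_z (\<beta> + \<delta> * u) (h + \<delta> * v) N) / real N - Pp\<bar> < \<delta> * \<eta> \<and>
          \<bar>ln (cw_z (\<beta> + \<delta> * (-u)) (h + \<delta> * (-v)) N) / real N - Pm\<bar> < \<delta> * \<eta>"
      have J1: "\<delta> * AN \<beta> h u v N \<le> ln (cw_z (\<beta> + \<delta> * u) (h + \<delta> * v) N) / real N - ln (cw_z \<beta> h N) / real N"
        using jensen_A H by blast
      have J2: "\<delta> * AN \<beta> h (-u) (-v) N \<le> ln (cw_z (\<beta> + \<delta> * (-u)) (h + \<delta> * (-v)) N) / real N - ln (cw_z \<beta> h N) / real N"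
        using jensen_A H by blast
      have "\<delta> * AN \<beta> h u v N < \<delta> * (D + 3 * \<eta>)"
        using J1 H Pp by (simp add: abs_less_iff algebra_simps)
      then have up: "AN \<beta> h u v N < D + 3 * \<eta>" using dp by simp
      have "- (\<delta> * AN \<beta> h u v N) < \<delta> * (- D + 3 * \<eta>)"
        using J2 H Pm unfolding AN_neg by (simp add: abs_less_iff algebra_simps)
      then have "\<delta> * (D - 3 * \<eta>) < \<delta> * AN \<beta> h u v N" by (simp add: algebra_simps)
      then have lo: "D - 3 * \<eta> < AN \<beta> h u v N" using dp by simp
      show "\<bar>AN \<beta> h u v N - D\<bar> < \<epsilon>" using up lo e unfolding \<eta>_def by (simp add: abs_less_iff)
    qed
  qed
  show ?thesis unfolding tendsto_iff dist_real_def using key unfolding D_def m_def by blast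
qed

lemma Emag_conv:
  assumes "hyp \<beta> h"
  shows "(\<lambda>N. cwE \<beta> h N (mag N)) \<longlonglongrightarrow> m0 \<beta> h"
  using moment_conv[OF assms, of 0 1] unfolding AN_def by simp

lemma Emag2_conv:
  assumes "hyp \<beta> h"
  shows "(\<lambda>N. cwE \<beta> h N (\<lambda>s. (mag N s)^2)) \<longlonglongrightarrow> (m0 \<beta> h)^2"
proof -
  have "(\<lambda>N. (cwE \<beta> h N (\<lambda>s. (mag N s)^2) - 1 / real N) / 2) \<longlonglongrightarrow> (m0 \<beta> h)^2 / 2"
    using moment_conv[OF assms, of 1 0] unfolding AN_def by simp
  then have "(\<lambda>N. 2 * ((cwE \<beta> h N (\<lambda>s. (mag N s)^2) - 1 / real N) / 2) + 1 / real N) \<longlonglongrightarrow> 2 * ((m0 \<beta> h)^2 / 2) + 0"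
    by (rule tendsto_add[OF tendsto_mult_left lim_inverse_n'])
  moreover have E: "\<And>x y::real. 2 * ((x - y) / 2) + y = x" by (simp add: field_simps)
  ultimately show ?thesis unfolding E by simp
qed

definition sw :: "nat \<Rightarrow> nat \<Rightarrow> nat \<Rightarrow> nat" where
  "sw i k x = (if x = i then k else if x = k then i else x)"

lemma sw_inv [simp]: "sw i k (sw i k x) = x"
  unfolding sw_def by auto

lemma sw_other [simp]: "x \<noteq> i \<Longrightarrow> x \<noteq> k \<Longrightarrow> sw i k x = x"
  unfolding sw_def by auto

lemma sw_first [simp]: "sw i k i = k"
  unfolding sw_def by auto


lemma cw_weight_alt: "cw_weight \<beta> h N s =
   exp (\<beta> / real N * (((\<Sum>i<N. s i)^2 - (\<Sum>i<N. (s i)^2)) / 2) + h * (\<Sum>i<N. s i))"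
  unfolding cw_weight_def pair_sum ..

lemma sum_transp:
  assumes "i < N" "k < N"
  shows "(\<Sum>x<N. g (sw i k x)) = (\<Sum>x<N. g x)"
proof -
  show ?thesis
  proof (rule sum.reindex_bij_witness[where i = "sw i k" and j = "sw i k"])
    fix x assume "x \<in> {..<N}"
    then show "sw i k (sw i k x) = x" "sw i k x \<in> {..<N}" using assms by (auto simp: sw_def)
  qed (use assms in \<open>auto simp: sw_def\<close>)
qed

lemma transp_spins:
  assumes "i < N" "k < N" "s \<in> spins N"
  shows "s \<circ> sw i k \<in> spins N"
proof -
  have "sw i k x \<in> {..<N}" if "x < N" for x
    using assms that by (auto simp: sw_def)
  moreover have "sw i k x = x" if "x \<ge> N" for x
    using assms that by (intro sw_other) auto
  ultimately show ?thesis using assms(3) unfolding spins_def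
    by (auto simp: PiE_iff extensional_def)
qed

lemma cw_weight_transp:
  assumes "i < N" "k < N"
  shows "cw_weight \<beta> h N (s \<circ> sw i k) = cw_weight \<beta> h N s"
  unfolding cw_weight_alt comp_def
  using sum_transp[OF assms, of s] sum_transp[OF assms, of "\<lambda>x. (s x)^2"] by simp

lemma cwE_transp:
  assumes "i < N" "k < N"
  shows "cwE \<beta> h N (\<lambda>s. f (s \<circ> sw i k)) = cwE \<beta> h N f"
proof -
  have "(\<Sum>s\<in>spins N. cw_weight \<beta> h N s * f (s \<circ> sw i k))
      = (\<Sum>s\<in>spins N. cw_weight \<beta> h N (s \<circ> sw i k) * f (s \<circ> sw i k))"
    using cw_weight_transp[OF assms] by simp
  also have "\<dots> = (\<Sum>t\<in>spins N. cw_weight \<beta> h N t * f t)"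
  proof (rule sum.reindex_bij_witness[where i = "\<lambda>t. t \<circ> sw i k" and j = "\<lambda>s. s \<circ> sw i k"])
    fix s assume "s \<in> spins N"
    then show "s \<circ> sw i k \<in> spins N" "(s \<circ> sw i k) \<circ> sw i k = s"
      using transp_spins[OF assms] by (auto simp: fun_eq_iff)
  next
    fix t assume "t \<in> spins N"
    then show "t \<circ> sw i k \<in> spins N" "(t \<circ> sw i k) \<circ> sw i k = t"
      using transp_spins[OF assms] by (auto simp: fun_eq_iff)
  qed simp
  finally show ?thesis unfolding cwE_def by simp
qed

lemma cwE_single:
  assumes "i < N" "k < N"
  shows "cwE \<beta> h N (\<lambda>s. s i) = cwE \<beta> h N (\<lambda>s. s k)"
  using cwE_transp[OF assms, of \<beta> h "\<lambda>s. s i"] by (simp add: comp_def)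

lemma cwE_pair1:
  assumes "i < N" "k < N" "j < N" "i \<noteq> j" "k \<noteq> j"
  shows "cwE \<beta> h N (\<lambda>s. s i * s j) = cwE \<beta> h N (\<lambda>s. s k * s j)"
  using cwE_transp[OF assms(1,2), of \<beta> h "\<lambda>s. s i * s j"] assms by (simp add: comp_def)

lemma cwE_pair:
  assumes "i < N" "j < N" "k < N" "l < N" "i \<noteq> j" "k \<noteq> l"
  shows "cwE \<beta> h N (\<lambda>s. s i * s j) = cwE \<beta> h N (\<lambda>s. s k * s l)"
proof -
  have sym: "cwE \<beta> h N (\<lambda>s. s a * s b) = cwE \<beta> h N (\<lambda>s. s b * s a)" for a b
    by (simp add: mult.commute)
  show ?thesis
  proof (cases "l = i")
    case True
    have "cwE \<beta> h N (\<lambda>s. s i * s j) = cwE \<beta> h N (\<lambda>s. s j * s l)" using sym True by simp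
    also have "\<dots> = cwE \<beta> h N (\<lambda>s. s k * s l)"
      using assms True by (intro cwE_pair1) auto
    finally show ?thesis .
  next
    case False
    have "cwE \<beta> h N (\<lambda>s. s i * s j) = cwE \<beta> h N (\<lambda>s. s j * s i)" by (rule sym)
    also have "\<dots> = cwE \<beta> h N (\<lambda>s. s l * s i)" using assms False by (intro cwE_pair1) auto
    also have "\<dots> = cwE \<beta> h N (\<lambda>s. s i * s l)" by (rule sym)
    also have "\<dots> = cwE \<beta> h N (\<lambda>s. s k * s l)" using assms False by (intro cwE_pair1) auto
    finally show ?thesis .
  qed
qed

lemma cwE_sum: "finite A \<Longrightarrow> cwE \<beta> h N (\<lambda>s. \<Sum>a\<in>A. f a s) = (\<Sum>a\<in>A. cwE \<beta> h N (f a))"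
proof -
  have "(\<Sum>s\<in>spins N. cw_weight \<beta> h N s * (\<Sum>a\<in>A. f a s)) = (\<Sum>s\<in>spins N. \<Sum>a\<in>A. cw_weight \<beta> h N s * f a s)"
    by (simp add: sum_distrib_left)
  also have "\<dots> = (\<Sum>a\<in>A. \<Sum>s\<in>spins N. cw_weight \<beta> h N s * f a s)" by (rule sum.swap)
  finally show ?thesis unfolding cwE_def by (simp add: sum_divide_distrib)
qed

lemma cwE_scale: "cwE \<beta> h N (\<lambda>s. c * f s) = c * cwE \<beta> h N f"
  using cwE_lin[of \<beta> h N c f 0 f 0] by simp

lemma E_si:
  assumes "i < N"
  shows "cwE \<beta> h N (\<lambda>s. s i) = cwE \<beta> h N (mag N)"
proof -
  have "cwE \<beta> h N (mag N) = cwE \<beta> h N (\<lambda>s. (1 / real N) * (\<Sum>k<N. s k))"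
    unfolding mag_def by simp
  also have "\<dots> = (1 / real N) * cwE \<beta> h N (\<lambda>s. \<Sum>k<N. s k)"
    by (rule cwE_scale)
  also have "cwE \<beta> h N (\<lambda>s. \<Sum>k<N. s k) = (\<Sum>k<N. cwE \<beta> h N (\<lambda>s. s k))"
    by (rule cwE_sum) simp
  also have "(\<Sum>k<N. cwE \<beta> h N (\<lambda>s. s k)) = (\<Sum>k<N. cwE \<beta> h N (\<lambda>s. s i))"
  proof (intro sum.cong refl)
    fix k assume "k \<in> {..<N}"
    then show "cwE \<beta> h N (\<lambda>s. s k) = cwE \<beta> h N (\<lambda>s. s i)" using cwE_single[of k N i] assms by simp
  qed
  finally show ?thesis using assms by simp
qed

lemma E_sisj:
  assumes "i < N" "j < N" "i \<noteq> j"
  shows "cwE \<beta> h N (\<lambda>s. s i * s j) = (real N * cwE \<beta> h N (\<lambda>s. (mag N s)^2) - 1) / (real N - 1)"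
proof -
  let ?c = "cwE \<beta> h N (\<lambda>s. s i * s j)"
  have N2: "N \<ge> 2" using assms by linarith
  have Nr: "real N \<noteq> 0" "real N - 1 \<noteq> 0" using N2 by auto
  have row: "(\<Sum>l<N. cwE \<beta> h N (\<lambda>s. s k * s l)) = 1 + (real N - 1) * ?c" if k: "k < N" for k
  proof -
    have "(\<Sum>l<N. cwE \<beta> h N (\<lambda>s. s k * s l)) = cwE \<beta> h N (\<lambda>s. s k * s k) + (\<Sum>l\<in>{..<N} - {k}. cwE \<beta> h N (\<lambda>s. s k * s l))"
      using k by (subst sum.remove[of _ k]) auto
    also have "cwE \<beta> h N (\<lambda>s. s k * s k) = cwE \<beta> h N (\<lambda>s. 1)"
      using spins_sq[OF _ k] by (intro cwE_cong) (simp add: power2_eq_square)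
    also have "\<dots> = 1" using cwE_const[of \<beta> h N 1] by simp
    also have "(\<Sum>l\<in>{..<N} - {k}. cwE \<beta> h N (\<lambda>s. s k * s l)) = (\<Sum>l\<in>{..<N} - {k}. ?c)"
      using assms k by (intro sum.cong refl cwE_pair[symmetric]) auto
    also have "\<dots> = (real N - 1) * ?c" using k by (simp add: of_nat_diff)
    finally show ?thesis .
  qed
  have "cwE \<beta> h N (\<lambda>s. (mag N s)^2) = cwE \<beta> h N (\<lambda>s. (1 / (real N)^2) * (\<Sum>k<N. \<Sum>l<N. s k * s l))"
    unfolding mag_def by (intro cwE_cong) (simp add: power2_eq_square sum_product power_divide)
  also have "\<dots> = (1 / (real N)^2) * cwE \<beta> h N (\<lambda>s. \<Sum>k<N. \<Sum>l<N. s k * s l)"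
    by (rule cwE_scale)
  also have "cwE \<beta> h N (\<lambda>s. \<Sum>k<N. \<Sum>l<N. s k * s l) = (\<Sum>k<N. cwE \<beta> h N (\<lambda>s. \<Sum>l<N. s k * s l))"
    by (rule cwE_sum) simp
  also have "\<dots> = (\<Sum>k<N. \<Sum>l<N. cwE \<beta> h N (\<lambda>s. s k * s l))"
    by (intro sum.cong refl cwE_sum) simp
  also have "(\<Sum>k<N. \<Sum>l<N. cwE \<beta> h N (\<lambda>s. s k * s l)) = (\<Sum>k<N. 1 + (real N - 1) * ?c)"
    using row by simp
  also have "\<dots> = real N * (1 + (real N - 1) * ?c)" by simp
  finally have "cwE \<beta> h N (\<lambda>s. (mag N s)^2) = (1 + (real N - 1) * ?c) / real N"
    using Nr by (simp add: power2_eq_square)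
  then show ?thesis using Nr by (simp add: field_simps)
qed

definition GW :: "nat \<Rightarrow> real \<Rightarrow> real \<Rightarrow> ((nat \<Rightarrow> real) \<Rightarrow> real) \<Rightarrow> (nat \<Rightarrow> real) \<Rightarrow> real" where
  "GW M \<beta> lam w p = ln 2 - \<beta> * (\<Sum>\<mu><M. (p \<mu>)\<^sup>2) / 2
     + (\<Sum>c\<in>spins M. w c * ln (cosh (\<beta> * (\<Sum>\<mu><M. c \<mu> * p \<mu>) + lam)))"

definition FW :: "nat \<Rightarrow> real \<Rightarrow> real \<Rightarrow> ((nat \<Rightarrow> real) \<Rightarrow> real) \<Rightarrow> real" where
  "FW M \<beta> lam w = (SUP p\<in>({..<M} \<rightarrow>\<^sub>E (UNIV::real set)). GW M \<beta> lam w p)"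

definition valid :: "nat \<Rightarrow> ((nat \<Rightarrow> real) \<Rightarrow> real) \<Rightarrow> bool" where
  "valid M w \<longleftrightarrow> (\<forall>c\<in>spins M. w c \<ge> 0) \<and> (\<Sum>c\<in>spins M. w c) = 1"

lemma Lbound:
  assumes "c \<in> spins M" "\<beta> > 0"
  shows "\<bar>ln (cosh (\<beta> * (\<Sum>\<mu><M. c \<mu> * p \<mu>) + lam))\<bar> \<le> \<beta> * (\<Sum>\<mu><M. \<bar>p \<mu>\<bar>) + \<bar>lam\<bar>"
proof -
  have "\<bar>\<Sum>\<mu><M. c \<mu> * p \<mu>\<bar> \<le> (\<Sum>\<mu><M. \<bar>c \<mu> * p \<mu>\<bar>)" by (rule sum_abs)
  also have "\<dots> = (\<Sum>\<mu><M. \<bar>p \<mu>\<bar>)"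
    using assms(1) by (intro sum.cong refl) (auto simp: abs_mult spins_abs)
  finally have sa: "\<bar>\<Sum>\<mu><M. c \<mu> * p \<mu>\<bar> \<le> (\<Sum>\<mu><M. \<bar>p \<mu>\<bar>)" .
  have "\<bar>\<beta> * (\<Sum>\<mu><M. c \<mu> * p \<mu>) + lam\<bar> \<le> \<bar>\<beta> * (\<Sum>\<mu><M. c \<mu> * p \<mu>)\<bar> + \<bar>lam\<bar>" by (rule abs_triangle_ineq)
  also have "\<bar>\<beta> * (\<Sum>\<mu><M. c \<mu> * p \<mu>)\<bar> = \<beta> * \<bar>\<Sum>\<mu><M. c \<mu> * p \<mu>\<bar>" using assms(2) by (simp add: abs_mult)
  also have "\<dots> \<le> \<beta> * (\<Sum>\<mu><M. \<bar>p \<mu>\<bar>)" using assms(2) sa by simp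
  finally have "\<bar>\<beta> * (\<Sum>\<mu><M. c \<mu> * p \<mu>) + lam\<bar> \<le> \<beta> * (\<Sum>\<mu><M. \<bar>p \<mu>\<bar>) + \<bar>lam\<bar>" by simp
  moreover have "\<bar>ln (cosh (\<beta> * (\<Sum>\<mu><M. c \<mu> * p \<mu>) + lam))\<bar> = ln (cosh (\<beta> * (\<Sum>\<mu><M. c \<mu> * p \<mu>) + lam))"
    using lncosh_nonneg by simp
  ultimately show ?thesis using lncosh_le_abs order_trans by metis
qed

lemma wsum_bound:
  assumes "valid M w" "\<And>c. c \<in> spins M \<Longrightarrow> f c \<le> (B::real)"
  shows "(\<Sum>c\<in>spins M. w c * f c) \<le> B"
proof -
  have "(\<Sum>c\<in>spins M. w c * f c) \<le> (\<Sum>c\<in>spins M. w c * B)"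
    using assms unfolding valid_def by (intro sum_mono mult_left_mono) auto
  also have "\<dots> = B" using assms(1) unfolding valid_def by (simp add: sum_distrib_right[symmetric])
  finally show ?thesis .
qed

lemma abs_sq_bound: "\<bar>x::real\<bar> - x^2 / 4 \<le> 1"
proof -
  have "0 \<le> (\<bar>x\<bar> - 2)^2" by simp
  then have "0 \<le> \<bar>x\<bar> * \<bar>x\<bar> - 4 * \<bar>x\<bar> + 4" by (simp add: power2_eq_square algebra_simps)
  then show ?thesis by (simp add: power2_eq_square)
qed

lemma GW_le:
  assumes "valid M w" "\<beta> > 0"
  shows "GW M \<beta> lam w p \<le> ln 2 + \<beta> * real M / 2 + \<bar>lam\<bar>"
proof -
  have L: "(\<Sum>c\<in>spins M. w c * ln (cosh (\<beta> * (\<Sum>\<mu><M. c \<mu> * p \<mu>) + lam))) \<le> \<beta> * (\<Sum>\<mu><M. \<bar>p \<mu>\<bar>) + \<bar>lam\<bar>"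
    using assms(1) by (rule wsum_bound) (use Lbound[OF _ assms(2)] abs_le_iff in blast)
  have "(\<Sum>\<mu><M. \<bar>p \<mu>\<bar> - (p \<mu>)^2 / 2) \<le> (\<Sum>\<mu><M. 1/2)"
  proof (intro sum_mono)
    fix \<mu> have "0 \<le> (\<bar>p \<mu>\<bar> - 1)^2" by simp
    then have "0 \<le> \<bar>p \<mu>\<bar> * \<bar>p \<mu>\<bar> - 2 * \<bar>p \<mu>\<bar> + 1" by (simp add: power2_eq_square algebra_simps)
    then show "\<bar>p \<mu>\<bar> - (p \<mu>)^2 / 2 \<le> 1/2" by (simp add: power2_eq_square)
  qed
  then have "(\<Sum>\<mu><M. \<bar>p \<mu>\<bar>) - (\<Sum>\<mu><M. (p \<mu>)^2) / 2 \<le> real M / 2"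
    by (simp add: sum_subtractf sum_divide_distrib[symmetric])
  then have "\<beta> * ((\<Sum>\<mu><M. \<bar>p \<mu>\<bar>) - (\<Sum>\<mu><M. (p \<mu>)^2) / 2) \<le> \<beta> * (real M / 2)"
    using assms(2) by (intro mult_left_mono) auto
  then have "\<beta> * (\<Sum>\<mu><M. \<bar>p \<mu>\<bar>) - \<beta> * (\<Sum>\<mu><M. (p \<mu>)^2) / 2 \<le> \<beta> * real M / 2"
    by (simp add: algebra_simps)
  then show ?thesis using L unfolding GW_def by linarith
qed

lemma GW_zero:
  assumes "valid M w"
  shows "GW M \<beta> lam w (\<lambda>\<mu>\<in>{..<M}. 0) \<ge> ln 2"
proof -
  have "(\<Sum>c\<in>spins M. w c * ln (cosh (\<beta> * (\<Sum>\<mu><M. c \<mu> * (\<lambda>\<mu>\<in>{..<M}. 0) \<mu>) + lam))) \<ge> 0"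
    using assms unfolding valid_def by (intro sum_nonneg mult_nonneg_nonneg) (auto intro: lncosh_nonneg cosh_real_ge_1)
  then show ?thesis unfolding GW_def by simp
qed

lemma GW_big:
  assumes "valid M w" "\<beta> > 0" "GW M \<beta> lam w p \<ge> ln 2"
  shows "\<beta> * (\<Sum>\<mu><M. \<bar>p \<mu>\<bar>) \<le> 2 * \<beta> * real M + \<bar>lam\<bar>"
proof -
  have L: "(\<Sum>c\<in>spins M. w c * ln (cosh (\<beta> * (\<Sum>\<mu><M. c \<mu> * p \<mu>) + lam))) \<le> \<beta> * (\<Sum>\<mu><M. \<bar>p \<mu>\<bar>) + \<bar>lam\<bar>"
    using assms(1) by (rule wsum_bound) (use Lbound[OF _ assms(2)] abs_le_iff in blast)
  have A: "\<beta> * (\<Sum>\<mu><M. (p \<mu>)^2) / 2 \<le> \<beta> * (\<Sum>\<mu><M. \<bar>p \<mu>\<bar>) + \<bar>lam\<bar>"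
    using assms(3) L unfolding GW_def by linarith
  have "(\<Sum>\<mu><M. \<bar>p \<mu>\<bar> - (p \<mu>)^2 / 4) \<le> (\<Sum>\<mu><M. 1)"
    by (intro sum_mono abs_sq_bound)
  then have "(\<Sum>\<mu><M. \<bar>p \<mu>\<bar>) - (\<Sum>\<mu><M. (p \<mu>)^2) / 4 \<le> real M"
    by (simp add: sum_subtractf sum_divide_distrib[symmetric])
  then have "\<beta> * ((\<Sum>\<mu><M. \<bar>p \<mu>\<bar>) - (\<Sum>\<mu><M. (p \<mu>)^2) / 4) \<le> \<beta> * real M"
    using assms(2) by (intro mult_left_mono) auto
  then have B: "\<beta> * (\<Sum>\<mu><M. \<bar>p \<mu>\<bar>) \<le> \<beta> * real M + \<beta> * (\<Sum>\<mu><M. (p \<mu>)^2) / 4"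
    by (simp add: algebra_simps)
  show ?thesis using A B by linarith
qed

lemma bdd_GW: "valid M w \<Longrightarrow> \<beta> > 0 \<Longrightarrow> bdd_above (GW M \<beta> lam w ` A)"
  using GW_le by (intro bdd_aboveI) blast

lemma zero_PiE: "(\<lambda>\<mu>\<in>{..<M}. 0::real) \<in> {..<M} \<rightarrow>\<^sub>E UNIV"
  by simp

lemma FW_ge: "valid M w \<Longrightarrow> \<beta> > 0 \<Longrightarrow> FW M \<beta> lam w \<ge> ln 2"
  unfolding FW_def using GW_zero[of M w \<beta> lam] zero_PiE[of M]
  by (intro cSUP_upper2[OF bdd_GW]) auto

lemma FW_upper: "valid M w \<Longrightarrow> \<beta> > 0 \<Longrightarrow> p \<in> {..<M} \<rightarrow>\<^sub>E UNIV \<Longrightarrow> GW M \<beta> lam w p \<le> FW M \<beta> lam w"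
  unfolding FW_def by (intro cSUP_upper bdd_GW) auto

lemma FW_lip:
  assumes w: "valid M w" and w': "valid M w'" and b: "\<beta> > 0"
  shows "FW M \<beta> lam w \<le> FW M \<beta> lam w' + (2 * \<beta> * real M + 2 * \<bar>lam\<bar>) * (\<Sum>c\<in>spins M. \<bar>w c - w' c\<bar>)"
proof -
  let ?K = "2 * \<beta> * real M + 2 * \<bar>lam\<bar>"
  let ?D = "\<Sum>c\<in>spins M. \<bar>w c - w' c\<bar>"
  have D0: "?D \<ge> 0" by (simp add: sum_nonneg)
  have K0: "?K \<ge> 0" using b by simp
  have "GW M \<beta> lam w p \<le> FW M \<beta> lam w' + ?K * ?D" if p: "p \<in> {..<M} \<rightarrow>\<^sub>E UNIV" for p
  proof (cases "GW M \<beta> lam w p \<ge> ln 2")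
    case False
    then have "GW M \<beta> lam w p \<le> FW M \<beta> lam w'" using FW_ge[OF w' b, of lam] by simp
    then show ?thesis using D0 K0 by (meson add_increasing2 mult_nonneg_nonneg order_trans order_refl)
  next
    case True
    have T: "\<beta> * (\<Sum>\<mu><M. \<bar>p \<mu>\<bar>) \<le> 2 * \<beta> * real M + \<bar>lam\<bar>" by (rule GW_big[OF w b True])
    let ?L = "\<lambda>c. ln (cosh (\<beta> * (\<Sum>\<mu><M. c \<mu> * p \<mu>) + lam))"
    have Lb: "\<bar>?L c\<bar> \<le> ?K" if "c \<in> spins M" for c
      using Lbound[OF that b, of p lam] T by linarith
    have "GW M \<beta> lam w p - GW M \<beta> lam w' p = (\<Sum>c\<in>spins M. (w c - w' c) * ?L c)"
      unfolding GW_def by (simp add: sum_subtractf left_diff_distrib)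
    also have "\<dots> \<le> (\<Sum>c\<in>spins M. \<bar>w c - w' c\<bar> * ?K)"
    proof (intro sum_mono)
      fix c assume c: "c \<in> spins M"
      have "(w c - w' c) * ?L c \<le> \<bar>(w c - w' c) * ?L c\<bar>" by (rule abs_ge_self)
      also have "\<dots> = \<bar>w c - w' c\<bar> * \<bar>?L c\<bar>" by (rule abs_mult)
      also have "\<dots> \<le> \<bar>w c - w' c\<bar> * ?K" using Lb[OF c] by (intro mult_left_mono) auto
      finally show "(w c - w' c) * ?L c \<le> \<bar>w c - w' c\<bar> * ?K" .
    qed
    also have "\<dots> = ?K * ?D" by (simp add: sum_distrib_right mult.commute)
    finally have "GW M \<beta> lam w p \<le> GW M \<beta> lam w' p + ?K * ?D" by simp
    also have "GW M \<beta> lam w' p \<le> FW M \<beta> lam w'" by (rule FW_upper[OF w' b p])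
    finally show ?thesis by simp
  qed
  then show ?thesis unfolding FW_def[of M \<beta> lam w]
    by (intro cSUP_least) (auto simp: PiE_eq_empty_iff)
qed

lemma FW_lip_abs:
  assumes w: "valid M w" and w': "valid M w'" and b: "\<beta> > 0"
  shows "\<bar>FW M \<beta> lam w - FW M \<beta> lam w'\<bar> \<le> (2 * \<beta> * real M + 2 * \<bar>lam\<bar>) * (\<Sum>c\<in>spins M. \<bar>w c - w' c\<bar>)"
proof -
  have "(\<Sum>c\<in>spins M. \<bar>w' c - w c\<bar>) = (\<Sum>c\<in>spins M. \<bar>w c - w' c\<bar>)"
    by (simp add: abs_minus_commute)
  then show ?thesis using FW_lip[OF w w' b, of lam] FW_lip[OF w' w b, of lam] by (simp add: abs_le_iff)
qed

definition EP :: "real \<Rightarrow> (nat \<Rightarrow> real) \<Rightarrow> nat \<Rightarrow> nat \<Rightarrow> ((nat \<Rightarrow> nat \<Rightarrow> real) \<Rightarrow> real) \<Rightarrow> real" where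
  "EP \<beta> hv M N f = (\<Sum>S\<in>training_sets M N. P_CW \<beta> hv M N S * f S)"

lemma finite_ts: "finite (training_sets M N)"
  unfolding training_sets_def using finite_spins by (intro finite_PiE) auto

lemma P_CW_nonneg: "P_CW \<beta> hv M N S \<ge> 0"
  unfolding P_CW_def using cw_weight_pos cw_z_pos by (intro prod_nonneg) (auto intro: less_imp_le)

lemma EP_prod:
  "EP \<beta> hv M N (\<lambda>S. \<Prod>\<mu><M. \<phi> \<mu> (S \<mu>)) = (\<Prod>\<mu><M. cwE \<beta> (hv \<mu>) N (\<phi> \<mu>))"
proof -
  have "(\<Prod>\<mu><M. cwE \<beta> (hv \<mu>) N (\<phi> \<mu>))
      = (\<Prod>\<mu><M. \<Sum>s\<in>spins N. cw_weight \<beta> (hv \<mu>) N s / cw_z \<beta> (hv \<mu>) N * \<phi> \<mu> s)"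
    unfolding cwE_def by (simp add: sum_divide_distrib)
  also have "\<dots> = (\<Sum>S\<in>training_sets M N. \<Prod>\<mu><M. cw_weight \<beta> (hv \<mu>) N (S \<mu>) / cw_z \<beta> (hv \<mu>) N * \<phi> \<mu> (S \<mu>))"
    unfolding training_sets_def by (rule prod_sum_PiE) (auto simp: finite_spins)
  also have "\<dots> = EP \<beta> hv M N (\<lambda>S. \<Prod>\<mu><M. \<phi> \<mu> (S \<mu>))"
    unfolding EP_def P_CW_def by (simp only: prod.distrib)
  finally show ?thesis by simp
qed

lemma EP_one: "EP \<beta> hv M N (\<lambda>S. 1) = 1"
  using EP_prod[of \<beta> hv M N "\<lambda>\<mu> s. 1"] cwE_const[of \<beta> _ N 1] by simp

lemma EP_lin: "EP \<beta> hv M N (\<lambda>S. a * f S + b * g S + c) = a * EP \<beta> hv M N f + b * EP \<beta> hv M N g + c"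
proof -
  have "EP \<beta> hv M N (\<lambda>S. a * f S + b * g S + c) = a * EP \<beta> hv M N f + b * EP \<beta> hv M N g + c * EP \<beta> hv M N (\<lambda>S. 1)"
    unfolding EP_def by (simp add: algebra_simps sum.distrib sum_distrib_left)
  then show ?thesis using EP_one by simp
qed

lemma EP_sum: "finite A \<Longrightarrow> EP \<beta> hv M N (\<lambda>S. \<Sum>a\<in>A. f a S) = (\<Sum>a\<in>A. EP \<beta> hv M N (f a))"
proof -
  assume "finite A"
  have "(\<Sum>S\<in>training_sets M N. P_CW \<beta> hv M N S * (\<Sum>a\<in>A. f a S)) = (\<Sum>S\<in>training_sets M N. \<Sum>a\<in>A. P_CW \<beta> hv M N S * f a S)"
    by (simp add: sum_distrib_left)
  also have "\<dots> = (\<Sum>a\<in>A. \<Sum>S\<in>training_sets M N. P_CW \<beta> hv M N S * f a S)" by (rule sum.swap)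
  finally show ?thesis unfolding EP_def .
qed

lemma EP_scale: "EP \<beta> hv M N (\<lambda>S. c * f S) = c * EP \<beta> hv M N f"
  using EP_lin[of \<beta> hv M N c f 0 f 0] by simp

lemma EP_mono: "(\<And>S. S \<in> training_sets M N \<Longrightarrow> f S \<le> g S) \<Longrightarrow> EP \<beta> hv M N f \<le> EP \<beta> hv M N g"
  unfolding EP_def using P_CW_nonneg by (intro sum_mono mult_left_mono) auto

lemma EP_cong: "(\<And>S. S \<in> training_sets M N \<Longrightarrow> f S = g S) \<Longrightarrow> EP \<beta> hv M N f = EP \<beta> hv M N g"
  unfolding EP_def by simp

lemma ts_pm1: "S \<in> training_sets M N \<Longrightarrow> pm1 M N S"
  unfolding training_sets_def pm1_def spins_def by (auto simp: PiE_iff)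

lemma ts_spins: "S \<in> training_sets M N \<Longrightarrow> \<mu> < M \<Longrightarrow> S \<mu> \<in> spins N"
  unfolding training_sets_def by (auto simp: PiE_iff)

definition Ycol :: "nat \<Rightarrow> nat \<Rightarrow> (nat \<Rightarrow> nat \<Rightarrow> real) \<Rightarrow> (nat \<Rightarrow> real) \<Rightarrow> real" where
  "Ycol M N S c = (\<Sum>i<N. \<Prod>\<mu><M. (1 + c \<mu> * S \<mu> i) / 2) / real N"

definition Bc :: "nat \<Rightarrow> (nat \<Rightarrow> real) \<Rightarrow> (nat \<Rightarrow> real) \<Rightarrow> real" where
  "Bc M a c = (\<Prod>\<mu><M. (1 + c \<mu> * a \<mu>) / 2)"

lemma indicator_prod:
  assumes "c \<in> spins M" "\<And>\<mu>. \<mu> < M \<Longrightarrow> x \<mu> = -1 \<or> x \<mu> = 1"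
  shows "(\<Prod>\<mu><M. (1 + c \<mu> * x \<mu>) / 2) = (if c = restrict x {..<M} then 1 else 0)"
proof (cases "c = restrict x {..<M}")
  case True
  then have "(1 + c \<mu> * x \<mu>) / 2 = 1" if "\<mu> < M" for \<mu>
    using assms(2)[OF that] that by (auto simp: fun_eq_iff)
  then show ?thesis using True by simp
next
  case False
  then obtain \<mu> where \<mu>: "\<mu> < M" "c \<mu> \<noteq> x \<mu>"
    using assms(1) unfolding spins_def by (auto simp: fun_eq_iff PiE_iff extensional_def split: if_splits)
  then have "(1 + c \<mu> * x \<mu>) / 2 = 0"
    using assms(2)[OF \<mu>(1)] spins_val[OF assms(1) \<mu>(1)] by auto
  then have "(\<Prod>\<mu><M. (1 + c \<mu> * x \<mu>) / 2) = 0" using \<mu>(1) by (intro prod_zero) auto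
  then show ?thesis using False by simp
qed

lemma restrict_col_spins: "(\<And>\<mu>. \<mu> < M \<Longrightarrow> x \<mu> = -1 \<or> x \<mu> = 1) \<Longrightarrow> restrict x {..<M} \<in> spins M"
  unfolding spins_def by auto

lemma sum_indicator:
  assumes "\<And>\<mu>. \<mu> < M \<Longrightarrow> x \<mu> = -1 \<or> x \<mu> = 1"
  shows "(\<Sum>c\<in>spins M. (\<Prod>\<mu><M. (1 + c \<mu> * x \<mu>) / 2) * g c) = g (restrict x {..<M})"
proof -
  have "(\<Sum>c\<in>spins M. (\<Prod>\<mu><M. (1 + c \<mu> * x \<mu>) / 2) * g c) = (\<Sum>c\<in>spins M. if c = restrict x {..<M} then g c else 0)"
    using indicator_prod[OF _ assms] by (intro sum.cong refl) auto
  also have "\<dots> = g (restrict x {..<M})"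
    using restrict_col_spins[OF assms] finite_spins by (simp add: sum.delta')
  finally show ?thesis .
qed

lemma col_pm: "S \<in> training_sets M N \<Longrightarrow> i < N \<Longrightarrow> \<mu> < M \<Longrightarrow> S \<mu> i = -1 \<or> S \<mu> i = 1"
  using ts_pm1 unfolding pm1_def by blast

lemma Ycol_valid:
  assumes "S \<in> training_sets M N" "N \<ge> 1"
  shows "valid M (Ycol M N S)"
proof -
  have "Ycol M N S c \<ge> 0" if "c \<in> spins M" for c
  proof -
    have "(1 + c \<mu> * S \<mu> i) / 2 \<ge> 0" if "\<mu> < M" "i < N" for \<mu> i
      using spins_val[OF \<open>c \<in> spins M\<close> that(1)] col_pm[OF assms(1) that(2,1)] by auto
    then show ?thesis unfolding Ycol_def by (intro divide_nonneg_nonneg sum_nonneg prod_nonneg) auto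
  qed
  moreover have "(\<Sum>c\<in>spins M. Ycol M N S c) = 1"
  proof -
    have "(\<Sum>c\<in>spins M. Ycol M N S c) = (\<Sum>i<N. \<Sum>c\<in>spins M. (\<Prod>\<mu><M. (1 + c \<mu> * S \<mu> i) / 2) * 1) / real N"
      unfolding Ycol_def by (simp add: sum_divide_distrib[symmetric] sum.swap[of _ "spins M"])
    also have "\<dots> = (\<Sum>i<N. 1) / real N"
      using sum_indicator[of M "\<lambda>\<mu>. S \<mu> _" "\<lambda>_. 1"] col_pm[OF assms(1)] by (intro arg_cong[where f="\<lambda>t. t / real N"] sum.cong refl) auto
    finally show ?thesis using assms(2) by simp
  qed
  ultimately show ?thesis unfolding valid_def by blast
qed

lemma Bc_valid:
  assumes "\<And>\<mu>. \<mu> < M \<Longrightarrow> \<bar>a \<mu>\<bar> \<le> 1"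
  shows "valid M (Bc M a)"
proof -
  have f: "(1 + y * a \<mu>) / 2 \<ge> 0" if "\<mu> < M" "y = -1 \<or> y = 1" for \<mu> y
    using assms[OF that(1)] that(2) by (auto simp: abs_le_iff)
  have "Bc M a c \<ge> 0" if "c \<in> spins M" for c
    unfolding Bc_def using f spins_val[OF that] by (intro prod_nonneg) auto
  moreover have "(\<Sum>c\<in>spins M. Bc M a c) = 1"
  proof -
    have "(\<Sum>c\<in>spins M. Bc M a c) = (\<Prod>\<mu><M. \<Sum>y\<in>{-1,1::real}. (1 + y * a \<mu>) / 2)"
      unfolding Bc_def spins_def by (rule prod_sum_PiE[symmetric]) auto
    also have "\<dots> = 1" by (simp add: add_divide_distrib[symmetric])
    finally show ?thesis .
  qed
  ultimately show ?thesis unfolding valid_def by blast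
qed

lemma Gemp_GW:
  assumes "S \<in> training_sets M N" "N \<ge> 1"
  shows "Gemp M N S \<beta> lam p = GW M \<beta> lam (Ycol M N S) p"
proof -
  let ?L = "\<lambda>c. ln (cosh (\<beta> * (\<Sum>\<mu><M. c \<mu> * p \<mu>) + lam))"
  have "(\<Sum>c\<in>spins M. Ycol M N S c * ?L c) = (\<Sum>i<N. \<Sum>c\<in>spins M. (\<Prod>\<mu><M. (1 + c \<mu> * S \<mu> i) / 2) * ?L c) / real N"
    unfolding Ycol_def by (simp add: sum_divide_distrib[symmetric] sum_distrib_right sum.swap[of _ "spins M"])
  also have "\<dots> = (\<Sum>i<N. ?L (restrict (\<lambda>\<mu>. S \<mu> i) {..<M})) / real N"
    using sum_indicator col_pm[OF assms(1)] by (intro arg_cong[where f="\<lambda>t. t / real N"] sum.cong refl) auto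
  also have "\<dots> = (\<Sum>i<N. ln (cosh (\<beta> * (\<Sum>\<mu><M. S \<mu> i * p \<mu>) + lam))) / real N"
    by simp
  finally show ?thesis unfolding Gemp_def GW_def by simp
qed

definition e1 :: "real \<Rightarrow> (nat \<Rightarrow> real) \<Rightarrow> nat \<Rightarrow> nat \<Rightarrow> real" where
  "e1 \<beta> hv N \<mu> = cwE \<beta> (hv \<mu>) N (mag N)"

definition e2p :: "real \<Rightarrow> (nat \<Rightarrow> real) \<Rightarrow> nat \<Rightarrow> nat \<Rightarrow> real" where
  "e2p \<beta> hv N \<mu> = (real N * cwE \<beta> (hv \<mu>) N (\<lambda>s. (mag N s)^2) - 1) / (real N - 1)"

lemma cwE_aff1:
  assumes "i < N"
  shows "cwE \<beta> h N (\<lambda>s. (1 + c * s i) / 2) = (1 + c * cwE \<beta> h N (mag N)) / 2"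
proof -
  have "cwE \<beta> h N (\<lambda>s. (1 + c * s i) / 2) = cwE \<beta> h N (\<lambda>s. (c / 2) * s i + 0 * s i + 1 / 2)"
    by (intro cwE_cong) (simp add: field_simps)
  also have "\<dots> = (c / 2) * cwE \<beta> h N (\<lambda>s. s i) + 1 / 2" by (simp only: cwE_lin)
  also have "cwE \<beta> h N (\<lambda>s. s i) = cwE \<beta> h N (mag N)" by (rule E_si[OF assms])
  finally show ?thesis by (simp add: field_simps)
qed

lemma cwE_aff_diag:
  assumes "i < N" "c = -1 \<or> c = 1"
  shows "cwE \<beta> h N (\<lambda>s. (1 + c * s i) / 2 * ((1 + c * s i) / 2)) = (1 + c * cwE \<beta> h N (mag N)) / 2"
proof -
  have "cwE \<beta> h N (\<lambda>s. (1 + c * s i) / 2 * ((1 + c * s i) / 2)) = cwE \<beta> h N (\<lambda>s. (1 + c * s i) / 2)"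
  proof (intro cwE_cong)
    fix s assume s: "s \<in> spins N"
    show "(1 + c * s i) / 2 * ((1 + c * s i) / 2) = (1 + c * s i) / 2"
      using spins_val[OF s assms(1)] assms(2) by auto
  qed
  then show ?thesis using cwE_aff1[OF assms(1)] by simp
qed

lemma cwE_aff_off:
  assumes "i < N" "j < N" "i \<noteq> j" "c = -1 \<or> c = 1"
  shows "cwE \<beta> h N (\<lambda>s. (1 + c * s i) / 2 * ((1 + c * s j) / 2))
       = (1 + 2 * c * cwE \<beta> h N (mag N) + (real N * cwE \<beta> h N (\<lambda>s. (mag N s)^2) - 1) / (real N - 1)) / 4"
proof -
  have "cwE \<beta> h N (\<lambda>s. (1 + c * s i) / 2 * ((1 + c * s j) / 2))
      = cwE \<beta> h N (\<lambda>s. (c / 4) * (s i + s j) + (1 / 4) * (s i * s j) + 1 / 4)"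
  proof (intro cwE_cong)
    fix s assume s: "s \<in> spins N"
    have "c * c = 1" using assms(4) by auto
    then show "(1 + c * s i) / 2 * ((1 + c * s j) / 2) = (c / 4) * (s i + s j) + (1 / 4) * (s i * s j) + 1 / 4"
      by (simp add: field_simps)
  qed
  also have "\<dots> = (c / 4) * cwE \<beta> h N (\<lambda>s. s i + s j) + (1 / 4) * cwE \<beta> h N (\<lambda>s. s i * s j) + 1 / 4"
    by (rule cwE_lin)
  also have "cwE \<beta> h N (\<lambda>s. s i + s j) = cwE \<beta> h N (\<lambda>s. s i) + cwE \<beta> h N (\<lambda>s. s j)"
    using cwE_lin[of \<beta> h N 1 "\<lambda>s. s i" 1 "\<lambda>s. s j" 0] by simp
  also have "\<dots> = 2 * cwE \<beta> h N (mag N)" using E_si assms by simp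
  also have "cwE \<beta> h N (\<lambda>s. s i * s j) = (real N * cwE \<beta> h N (\<lambda>s. (mag N s)^2) - 1) / (real N - 1)"
    by (rule E_sisj[OF assms(1-3)])
  finally have H: "cwE \<beta> h N (\<lambda>s. (1 + c * s i) / 2 * ((1 + c * s j) / 2)) = c / 4 * (2 * cwE \<beta> h N (mag N))
      + 1 / 4 * ((real N * cwE \<beta> h N (\<lambda>s. (mag N s)^2) - 1) / (real N - 1)) + 1 / 4" .
  have lin: "\<And>E X::real. c / 4 * (2 * E) + 1 / 4 * X + 1 / 4 = (1 + 2 * c * E + X) / 4" by (simp add: field_simps)
  show ?thesis unfolding H by (rule lin)
qed

lemma EY:
  assumes "N \<ge> 1" "c \<in> spins M"
  shows "EP \<beta> hv M N (\<lambda>S. Ycol M N S c) = (\<Prod>\<mu><M. (1 + c \<mu> * e1 \<beta> hv N \<mu>) / 2)"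
proof -
  have "EP \<beta> hv M N (\<lambda>S. Ycol M N S c) = EP \<beta> hv M N (\<lambda>S. (1 / real N) * (\<Sum>i<N. \<Prod>\<mu><M. (1 + c \<mu> * S \<mu> i) / 2))"
    unfolding Ycol_def by simp
  also have "\<dots> = (1 / real N) * EP \<beta> hv M N (\<lambda>S. \<Sum>i<N. \<Prod>\<mu><M. (1 + c \<mu> * S \<mu> i) / 2)"
    by (rule EP_scale)
  also have "EP \<beta> hv M N (\<lambda>S. \<Sum>i<N. \<Prod>\<mu><M. (1 + c \<mu> * S \<mu> i) / 2) = (\<Sum>i<N. EP \<beta> hv M N (\<lambda>S. \<Prod>\<mu><M. (1 + c \<mu> * S \<mu> i) / 2))"
    by (rule EP_sum) simp
  also have "\<dots> = (\<Sum>i<N. \<Prod>\<mu><M. (1 + c \<mu> * e1 \<beta> hv N \<mu>) / 2)"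
  proof (intro sum.cong refl)
    fix i assume i: "i \<in> {..<N}"
    have "EP \<beta> hv M N (\<lambda>S. \<Prod>\<mu><M. (1 + c \<mu> * S \<mu> i) / 2) = (\<Prod>\<mu><M. cwE \<beta> (hv \<mu>) N (\<lambda>s. (1 + c \<mu> * s i) / 2))"
      by (rule EP_prod)
    also have "\<dots> = (\<Prod>\<mu><M. (1 + c \<mu> * e1 \<beta> hv N \<mu>) / 2)"
      using i unfolding e1_def by (intro prod.cong refl cwE_aff1) auto
    finally show "EP \<beta> hv M N (\<lambda>S. \<Prod>\<mu><M. (1 + c \<mu> * S \<mu> i) / 2) = (\<Prod>\<mu><M. (1 + c \<mu> * e1 \<beta> hv N \<mu>) / 2)" .
  qed
  finally show ?thesis using assms(1) by simp
qed

lemma sum_diag_off: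
  fixes X :: "nat \<Rightarrow> nat \<Rightarrow> real"
  assumes "\<And>i. i < N \<Longrightarrow> X i i = A" "\<And>i j. i < N \<Longrightarrow> j < N \<Longrightarrow> i \<noteq> j \<Longrightarrow> X i j = B"
  shows "(\<Sum>i<N. \<Sum>j<N. X i j) = real N * A + real N * (real N - 1) * B"
proof -
  have row: "(\<Sum>j<N. X i j) = A + (real N - 1) * B" if i: "i < N" for i
  proof -
    have "(\<Sum>j<N. X i j) = X i i + (\<Sum>j\<in>{..<N} - {i}. X i j)" using i by (subst sum.remove[of _ i]) auto
    also have "(\<Sum>j\<in>{..<N} - {i}. X i j) = (\<Sum>j\<in>{..<N} - {i}. B)" using assms(2) i by (intro sum.cong refl) auto
    also have "\<dots> = (real N - 1) * B" using i by (simp add: of_nat_diff)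
    finally show ?thesis using assms(1)[OF i] by simp
  qed
  have "(\<Sum>i<N. \<Sum>j<N. X i j) = (\<Sum>i<N. A + (real N - 1) * B)" using row by simp
  also have "\<dots> = real N * A + real N * (real N - 1) * B" by (simp add: algebra_simps)
  finally show ?thesis .
qed

lemma EY2:
  assumes "N \<ge> 1" "c \<in> spins M"
  shows "EP \<beta> hv M N (\<lambda>S. (Ycol M N S c)^2)
    = (\<Prod>\<mu><M. (1 + c \<mu> * e1 \<beta> hv N \<mu>) / 2) / real N
      + (1 - 1 / real N) * (\<Prod>\<mu><M. (1 + 2 * c \<mu> * e1 \<beta> hv N \<mu> + e2p \<beta> hv N \<mu>) / 4)"
proof -
  let ?a = "\<lambda>S i. \<Prod>\<mu><M. (1 + c \<mu> * S \<mu> i) / 2"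
  let ?D1 = "\<Prod>\<mu><M. (1 + c \<mu> * e1 \<beta> hv N \<mu>) / 2"
  let ?D2 = "\<Prod>\<mu><M. (1 + 2 * c \<mu> * e1 \<beta> hv N \<mu> + e2p \<beta> hv N \<mu>) / 4"
  have Nr: "real N > 0" using assms by simp
  have "EP \<beta> hv M N (\<lambda>S. (Ycol M N S c)^2) = EP \<beta> hv M N (\<lambda>S. (1 / (real N)^2) * (\<Sum>i<N. \<Sum>j<N. ?a S i * ?a S j))"
    unfolding Ycol_def by (intro EP_cong) (simp add: power2_eq_square sum_product power_divide)
  also have "\<dots> = (1 / (real N)^2) * EP \<beta> hv M N (\<lambda>S. \<Sum>i<N. \<Sum>j<N. ?a S i * ?a S j)" by (rule EP_scale)
  also have "EP \<beta> hv M N (\<lambda>S. \<Sum>i<N. \<Sum>j<N. ?a S i * ?a S j) = (\<Sum>i<N. EP \<beta> hv M N (\<lambda>S. \<Sum>j<N. ?a S i * ?a S j))"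
    by (rule EP_sum) simp
  also have "\<dots> = (\<Sum>i<N. \<Sum>j<N. EP \<beta> hv M N (\<lambda>S. ?a S i * ?a S j))"
    by (intro sum.cong refl EP_sum) simp
  also have "\<dots> = real N * ?D1 + real N * (real N - 1) * ?D2"
  proof (rule sum_diag_off)
    fix i assume i: "i < N"
    have "EP \<beta> hv M N (\<lambda>S. ?a S i * ?a S i) = EP \<beta> hv M N (\<lambda>S. \<Prod>\<mu><M. (1 + c \<mu> * S \<mu> i) / 2 * ((1 + c \<mu> * S \<mu> i) / 2))"
      by (simp only: prod.distrib)
    also have "\<dots> = (\<Prod>\<mu><M. cwE \<beta> (hv \<mu>) N (\<lambda>s. (1 + c \<mu> * s i) / 2 * ((1 + c \<mu> * s i) / 2)))" by (rule EP_prod)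
    also have "\<dots> = ?D1" unfolding e1_def
      using i spins_val[OF assms(2)] by (intro prod.cong refl cwE_aff_diag) auto
    finally show "EP \<beta> hv M N (\<lambda>S. ?a S i * ?a S i) = ?D1" .
  next
    fix i j assume ij: "i < N" "j < N" "i \<noteq> j"
    have "EP \<beta> hv M N (\<lambda>S. ?a S i * ?a S j) = EP \<beta> hv M N (\<lambda>S. \<Prod>\<mu><M. (1 + c \<mu> * S \<mu> i) / 2 * ((1 + c \<mu> * S \<mu> j) / 2))"
      by (simp only: prod.distrib)
    also have "\<dots> = (\<Prod>\<mu><M. cwE \<beta> (hv \<mu>) N (\<lambda>s. (1 + c \<mu> * s i) / 2 * ((1 + c \<mu> * s j) / 2)))" by (rule EP_prod)
    also have "\<dots> = ?D2" unfolding e1_def e2p_def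
      using ij spins_val[OF assms(2)] by (intro prod.cong refl cwE_aff_off) (auto simp: mult.assoc)
    finally show "EP \<beta> hv M N (\<lambda>S. ?a S i * ?a S j) = ?D2" .
  qed
  finally have H: "EP \<beta> hv M N (\<lambda>S. (Ycol M N S c)^2) = 1 / (real N)^2 * (real N * ?D1 + real N * (real N - 1) * ?D2)" .
  have "1 / (real N)^2 * (real N * ?D1 + real N * (real N - 1) * ?D2) = ?D1 / real N + (1 - 1 / real N) * ?D2"
    using Nr by (simp add: field_simps power2_eq_square)
  then show ?thesis using H by simp
qed

lemma e1_lim:
  assumes "hyp \<beta> (hv \<mu>)"
  shows "(\<lambda>N. e1 \<beta> hv N \<mu>) \<longlonglongrightarrow> m0 \<beta> (hv \<mu>)"
  unfolding e1_def by (rule Emag_conv[OF assms])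

lemma e2p_lim:
  assumes "hyp \<beta> (hv \<mu>)"
  shows "(\<lambda>N. e2p \<beta> hv N \<mu>) \<longlonglongrightarrow> (m0 \<beta> (hv \<mu>))^2"
proof -
  let ?e = "\<lambda>N. cwE \<beta> (hv \<mu>) N (\<lambda>s. (mag N s)^2)"
  have a: "(\<lambda>N. real N / (real N - 1)) \<longlonglongrightarrow> 1" by real_asymp
  have b: "(\<lambda>N. 1 / (real N - 1)) \<longlonglongrightarrow> 0" by real_asymp
  have "(\<lambda>N. real N / (real N - 1) * ?e N - 1 / (real N - 1)) \<longlonglongrightarrow> 1 * (m0 \<beta> (hv \<mu>))^2 - 0"
    by (intro tendsto_diff tendsto_mult a b Emag2_conv[OF assms])
  then have l: "(\<lambda>N. real N / (real N - 1) * ?e N - 1 / (real N - 1)) \<longlonglongrightarrow> (m0 \<beta> (hv \<mu>))^2" by simp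
  have ev: "\<forall>\<^sub>F N in sequentially. real N / (real N - 1) * ?e N - 1 / (real N - 1) = e2p \<beta> hv N \<mu>"
  proof -
    have "\<forall>\<^sub>F N in sequentially. N \<ge> 2" using eventually_ge_at_top by blast
    then show ?thesis
    proof (rule eventually_mono)
      fix N :: nat assume "N \<ge> 2"
      then have "real N - 1 \<noteq> 0" by simp
      then show "real N / (real N - 1) * ?e N - 1 / (real N - 1) = e2p \<beta> hv N \<mu>"
        unfolding e2p_def by (simp add: diff_divide_distrib)
    qed
  qed
  show ?thesis using Lim_transform_eventually[OF l ev] .
qed

lemma ev_N1: "\<forall>\<^sub>F N in sequentially. N \<ge> (1::nat)"
  using eventually_ge_at_top by blast

lemma EY_lim:
  assumes hv: "\<And>\<mu>. \<mu> < M \<Longrightarrow> hyp \<beta> (hv \<mu>)" and c: "c \<in> spins M"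
  shows "(\<lambda>N. EP \<beta> hv M N (\<lambda>S. Ycol M N S c)) \<longlonglongrightarrow> Bc M (\<lambda>\<mu>. m0 \<beta> (hv \<mu>)) c"
proof -
  have "(\<lambda>N. \<Prod>\<mu><M. (1 + c \<mu> * e1 \<beta> hv N \<mu>) / 2) \<longlonglongrightarrow> (\<Prod>\<mu><M. (1 + c \<mu> * m0 \<beta> (hv \<mu>)) / 2)"
    using hv by (intro tendsto_prod tendsto_divide tendsto_add tendsto_mult tendsto_const e1_lim) auto
  moreover have "\<forall>\<^sub>F N in sequentially. (\<Prod>\<mu><M. (1 + c \<mu> * e1 \<beta> hv N \<mu>) / 2) = EP \<beta> hv M N (\<lambda>S. Ycol M N S c)"
    using ev_N1 by (rule eventually_mono) (simp add: EY[OF _ c])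
  ultimately show ?thesis unfolding Bc_def by (rule Lim_transform_eventually)
qed

lemma EY2_lim:
  assumes hv: "\<And>\<mu>. \<mu> < M \<Longrightarrow> hyp \<beta> (hv \<mu>)" and c: "c \<in> spins M"
  shows "(\<lambda>N. EP \<beta> hv M N (\<lambda>S. (Ycol M N S c)^2)) \<longlonglongrightarrow> (Bc M (\<lambda>\<mu>. m0 \<beta> (hv \<mu>)) c)^2"
proof -
  let ?a = "\<lambda>\<mu>. m0 \<beta> (hv \<mu>)"
  have l1: "(\<lambda>N. \<Prod>\<mu><M. (1 + c \<mu> * e1 \<beta> hv N \<mu>) / 2) \<longlonglongrightarrow> (\<Prod>\<mu><M. (1 + c \<mu> * ?a \<mu>) / 2)"
    using hv by (intro tendsto_prod tendsto_divide tendsto_add tendsto_mult tendsto_const e1_lim) auto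
  have l2: "(\<lambda>N. \<Prod>\<mu><M. (1 + 2 * c \<mu> * e1 \<beta> hv N \<mu> + e2p \<beta> hv N \<mu>) / 4) \<longlonglongrightarrow> (\<Prod>\<mu><M. (1 + 2 * c \<mu> * ?a \<mu> + (?a \<mu>)^2) / 4)"
    using hv by (intro tendsto_prod tendsto_divide tendsto_add tendsto_mult tendsto_const e1_lim e2p_lim) auto
  have inv: "(\<lambda>N. 1 / real N) \<longlonglongrightarrow> 0" by (rule lim_inverse_n')
  have "(\<lambda>N. (\<Prod>\<mu><M. (1 + c \<mu> * e1 \<beta> hv N \<mu>) / 2) * (1 / real N)
      + (1 - 1 / real N) * (\<Prod>\<mu><M. (1 + 2 * c \<mu> * e1 \<beta> hv N \<mu> + e2p \<beta> hv N \<mu>) / 4))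
      \<longlonglongrightarrow> (\<Prod>\<mu><M. (1 + c \<mu> * ?a \<mu>) / 2) * 0 + (1 - 0) * (\<Prod>\<mu><M. (1 + 2 * c \<mu> * ?a \<mu> + (?a \<mu>)^2) / 4)"
    by (intro tendsto_add tendsto_mult tendsto_diff tendsto_const l1 l2 inv)
  moreover have "(\<Prod>\<mu><M. (1 + 2 * c \<mu> * ?a \<mu> + (?a \<mu>)^2) / 4) = (Bc M ?a c)^2"
  proof -
    have "(1 + 2 * c \<mu> * ?a \<mu> + (?a \<mu>)^2) / 4 = ((1 + c \<mu> * ?a \<mu>) / 2)^2" if "\<mu> < M" for \<mu>
    proof -
      have "c \<mu> * c \<mu> = 1" using spins_val[OF c that] by auto
      then show ?thesis by (simp add: power2_eq_square field_simps)
    qed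
    then show ?thesis unfolding Bc_def by (simp add: prod_power_distrib[symmetric])
  qed
  moreover have "\<forall>\<^sub>F N in sequentially. (\<Prod>\<mu><M. (1 + c \<mu> * e1 \<beta> hv N \<mu>) / 2) * (1 / real N)
      + (1 - 1 / real N) * (\<Prod>\<mu><M. (1 + 2 * c \<mu> * e1 \<beta> hv N \<mu> + e2p \<beta> hv N \<mu>) / 4)
      = EP \<beta> hv M N (\<lambda>S. (Ycol M N S c)^2)"
    using ev_N1 by (rule eventually_mono) (simp add: EY2[OF _ c])
  ultimately show ?thesis by (simp add: Lim_transform_eventually)
qed

lemma EYdev_lim:
  assumes hv: "\<And>\<mu>. \<mu> < M \<Longrightarrow> hyp \<beta> (hv \<mu>)" and c: "c \<in> spins M"
  shows "(\<lambda>N. EP \<beta> hv M N (\<lambda>S. (Ycol M N S c - Bc M (\<lambda>\<mu>. m0 \<beta> (hv \<mu>)) c)^2)) \<longlonglongrightarrow> 0"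
proof -
  let ?B = "Bc M (\<lambda>\<mu>. m0 \<beta> (hv \<mu>)) c"
  have eq: "EP \<beta> hv M N (\<lambda>S. (Ycol M N S c - ?B)^2) =
      1 * EP \<beta> hv M N (\<lambda>S. (Ycol M N S c)^2) + (- 2 * ?B) * EP \<beta> hv M N (\<lambda>S. Ycol M N S c) + ?B^2" for N
  proof -
    have "EP \<beta> hv M N (\<lambda>S. (Ycol M N S c - ?B)^2) = EP \<beta> hv M N (\<lambda>S. 1 * (Ycol M N S c)^2 + (- 2 * ?B) * Ycol M N S c + ?B^2)"
      by (intro EP_cong) (simp add: power2_eq_square algebra_simps)
    then show ?thesis by (simp only: EP_lin)
  qed
  have "(\<lambda>N. 1 * EP \<beta> hv M N (\<lambda>S. (Ycol M N S c)^2) + (- 2 * ?B) * EP \<beta> hv M N (\<lambda>S. Ycol M N S c) + ?B^2)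
      \<longlonglongrightarrow> 1 * ?B^2 + (- 2 * ?B) * ?B + ?B^2"
    by (intro tendsto_add tendsto_mult tendsto_const EY2_lim[OF hv c] EY_lim[OF hv c]) auto
  then show ?thesis unfolding eq by (simp add: power2_eq_square)
qed

lemma abs_le_sq: "\<eta> > 0 \<Longrightarrow> \<bar>x::real\<bar> \<le> x^2 / (2 * \<eta>) + \<eta> / 2"
proof -
  assume e: "\<eta> > 0"
  have "0 \<le> (\<bar>x\<bar> - \<eta>)^2" by simp
  then have "2 * \<eta> * \<bar>x\<bar> \<le> x^2 + \<eta>^2" by (simp add: power2_eq_square algebra_simps abs_mult_self_eq)
  then show ?thesis using e by (simp add: field_simps power2_eq_square)
qed

lemma EYabs_lim:
  assumes hv: "\<And>\<mu>. \<mu> < M \<Longrightarrow> hyp \<beta> (hv \<mu>)" and c: "c \<in> spins M"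
  shows "(\<lambda>N. EP \<beta> hv M N (\<lambda>S. \<bar>Ycol M N S c - Bc M (\<lambda>\<mu>. m0 \<beta> (hv \<mu>)) c\<bar>)) \<longlonglongrightarrow> 0"
proof -
  let ?B = "Bc M (\<lambda>\<mu>. m0 \<beta> (hv \<mu>)) c"
  let ?V = "\<lambda>N. EP \<beta> hv M N (\<lambda>S. (Ycol M N S c - ?B)^2)"
  let ?A = "\<lambda>N. EP \<beta> hv M N (\<lambda>S. \<bar>Ycol M N S c - ?B\<bar>)"
  have V: "?V \<longlonglongrightarrow> 0" by (rule EYdev_lim[OF hv c])
  have "\<forall>\<^sub>F N in sequentially. \<bar>?A N\<bar> < \<epsilon>" if e: "\<epsilon> > 0" for \<epsilon>
  proof -
    define \<eta> where "\<eta> = \<epsilon> / 2"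
    have eta: "\<eta> > 0" unfolding \<eta>_def using e by simp
    have "\<forall>\<^sub>F N in sequentially. \<bar>?V N - 0\<bar> < \<eta>^2" using V eta unfolding tendsto_iff dist_real_def by simp
    then show ?thesis
    proof (rule eventually_mono)
      fix N assume VN: "\<bar>?V N - 0\<bar> < \<eta>^2"
      have A0: "?A N \<ge> 0" unfolding EP_def using P_CW_nonneg by (intro sum_nonneg mult_nonneg_nonneg) auto
      have "?A N \<le> EP \<beta> hv M N (\<lambda>S. (1 / (2 * \<eta>)) * (Ycol M N S c - ?B)^2 + 0 * (Ycol M N S c - ?B)^2 + \<eta> / 2)"
        using abs_le_sq[OF eta] by (intro EP_mono) simp
      also have "\<dots> = ?V N / (2 * \<eta>) + \<eta> / 2" by (simp only: EP_lin) simp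
      also have "\<dots> < \<eta>^2 / (2 * \<eta>) + \<eta> / 2" using VN eta by (simp add: divide_strict_right_mono)
      also have "\<dots> = \<eta>" using eta by (simp add: power2_eq_square field_simps)
      finally show "\<bar>?A N\<bar> < \<epsilon>" using A0 e unfolding \<eta>_def by simp
    qed
  qed
  then show ?thesis unfolding tendsto_iff dist_real_def by simp
qed

definition flipv :: "nat \<Rightarrow> (nat \<Rightarrow> real) \<Rightarrow> (nat \<Rightarrow> real) \<Rightarrow> (nat \<Rightarrow> real)" where
  "flipv M \<epsilon> p = (\<lambda>\<mu>\<in>{..<M}. \<epsilon> \<mu> * p \<mu>)"

lemma flipv_flipv:
  assumes "\<epsilon> \<in> spins M" "p \<in> {..<M} \<rightarrow>\<^sub>E A"
  shows "flipv M \<epsilon> (flipv M \<epsilon> p) = p"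
proof -
  have "\<epsilon> \<mu> * (\<epsilon> \<mu> * p \<mu>) = p \<mu>" if "\<mu> < M" for \<mu>
    using spins_val[OF assms(1) that] by auto
  then show ?thesis using assms(2) unfolding flipv_def by (auto simp: fun_eq_iff PiE_iff extensional_def)
qed

lemma flipv_spins: "\<epsilon> \<in> spins M \<Longrightarrow> c \<in> spins M \<Longrightarrow> flipv M \<epsilon> c \<in> spins M"
proof -
  assume e: "\<epsilon> \<in> spins M" and c: "c \<in> spins M"
  have "\<epsilon> \<mu> * c \<mu> \<in> {-1,1}" if "\<mu> < M" for \<mu>
    using spins_val[OF e that] spins_val[OF c that] by auto
  then show ?thesis unfolding flipv_def spins_def by auto
qed

lemma flipv_PiE: "flipv M \<epsilon> p \<in> {..<M} \<rightarrow>\<^sub>E (UNIV::real set)"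
  unfolding flipv_def by simp

lemma flipv_image: "\<epsilon> \<in> spins M \<Longrightarrow> flipv M \<epsilon> ` ({..<M} \<rightarrow>\<^sub>E (UNIV::real set)) = {..<M} \<rightarrow>\<^sub>E UNIV"
proof (intro set_eqI iffI)
  fix q assume e: "\<epsilon> \<in> spins M" and q: "q \<in> {..<M} \<rightarrow>\<^sub>E (UNIV::real set)"
  have "q = flipv M \<epsilon> (flipv M \<epsilon> q)" using flipv_flipv[OF e q] by simp
  then show "q \<in> flipv M \<epsilon> ` ({..<M} \<rightarrow>\<^sub>E UNIV)" using flipv_PiE by blast
qed (metis flipv_PiE imageE)

lemma GW_flipv:
  assumes e: "\<epsilon> \<in> spins M"
  shows "GW M \<beta> lam (Bc M (\<lambda>\<mu>. \<epsilon> \<mu> * m)) p = GW M \<beta> lam (iid_prob m M) (flipv M \<epsilon> p)"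
proof -
  let ?L = "\<lambda>c q. ln (cosh (\<beta> * (\<Sum>\<mu><M. c \<mu> * q \<mu>) + lam))"
  have sq: "(\<Sum>\<mu><M. (flipv M \<epsilon> p \<mu>)^2) = (\<Sum>\<mu><M. (p \<mu>)^2)"
  proof (intro sum.cong refl)
    fix \<mu> assume "\<mu> \<in> {..<M}"
    then have "(\<epsilon> \<mu>)^2 = 1" using spins_sq[OF e] by simp
    then show "(flipv M \<epsilon> p \<mu>)^2 = (p \<mu>)^2" using \<open>\<mu> \<in> {..<M}\<close> unfolding flipv_def by (simp add: power_mult_distrib)
  qed
  have "(\<Sum>c\<in>spins M. Bc M (\<lambda>\<mu>. \<epsilon> \<mu> * m) c * ?L c p)
      = (\<Sum>c\<in>spins M. iid_prob m M (flipv M \<epsilon> c) * ?L (flipv M \<epsilon> c) (flipv M \<epsilon> p))"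
  proof (intro sum.cong refl)
    fix c assume c: "c \<in> spins M"
    have "Bc M (\<lambda>\<mu>. \<epsilon> \<mu> * m) c = iid_prob m M (flipv M \<epsilon> c)"
      unfolding Bc_def iid_prob_def flipv_def by (intro prod.cong refl) (simp add: mult_ac)
    moreover have "(\<Sum>\<mu><M. c \<mu> * p \<mu>) = (\<Sum>\<mu><M. flipv M \<epsilon> c \<mu> * flipv M \<epsilon> p \<mu>)"
    proof (intro sum.cong refl)
      fix \<mu> assume "\<mu> \<in> {..<M}"
      then have "\<epsilon> \<mu> * \<epsilon> \<mu> = 1" using spins_val[OF e] by fastforce
      then show "c \<mu> * p \<mu> = flipv M \<epsilon> c \<mu> * flipv M \<epsilon> p \<mu>" using \<open>\<mu> \<in> {..<M}\<close> unfolding flipv_def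
        by (simp add: algebra_simps)
    qed
    ultimately show "Bc M (\<lambda>\<mu>. \<epsilon> \<mu> * m) c * ?L c p = iid_prob m M (flipv M \<epsilon> c) * ?L (flipv M \<epsilon> c) (flipv M \<epsilon> p)"
      by simp
  qed
  also have "\<dots> = (\<Sum>c\<in>spins M. iid_prob m M c * ?L c (flipv M \<epsilon> p))"
  proof (rule sum.reindex_bij_witness[where i = "flipv M \<epsilon>" and j = "flipv M \<epsilon>"])
    fix c assume "c \<in> spins M"
    then show "flipv M \<epsilon> (flipv M \<epsilon> c) = c" "flipv M \<epsilon> c \<in> spins M"
      using flipv_flipv[OF e] flipv_spins[OF e] unfolding spins_def by auto
  qed (use flipv_flipv[OF e] flipv_spins[OF e] in \<open>auto simp: spins_def\<close>)
  finally show ?thesis unfolding GW_def sq by simp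
qed

lemma FW_flipv:
  assumes e: "\<epsilon> \<in> spins M"
  shows "FW M \<beta> lam (Bc M (\<lambda>\<mu>. \<epsilon> \<mu> * m)) = FW M \<beta> lam (iid_prob m M)"
proof -
  have "FW M \<beta> lam (Bc M (\<lambda>\<mu>. \<epsilon> \<mu> * m)) = Sup ((\<lambda>p. GW M \<beta> lam (iid_prob m M) (flipv M \<epsilon> p)) ` ({..<M} \<rightarrow>\<^sub>E UNIV))"
    unfolding FW_def using GW_flipv[OF e] by (intro arg_cong[where f=Sup] image_cong) auto
  also have "\<dots> = Sup (GW M \<beta> lam (iid_prob m M) ` (flipv M \<epsilon> ` ({..<M} \<rightarrow>\<^sub>E UNIV)))"
    by (simp add: image_image)
  also have "\<dots> = FW M \<beta> lam (iid_prob m M)" unfolding FW_def flipv_image[OF e] ..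
  finally show ?thesis .
qed

lemma g_fun_GW: "g_fun M p \<beta> lam h = GW M \<beta> lam (iid_prob (m0 \<beta> h) M) p"
  unfolding g_fun_def GW_def ..

lemma EP_abs: "\<bar>EP \<beta> hv M N f\<bar> \<le> EP \<beta> hv M N (\<lambda>S. \<bar>f S\<bar>)"
proof -
  have "EP \<beta> hv M N f \<le> EP \<beta> hv M N (\<lambda>S. \<bar>f S\<bar>)" by (intro EP_mono) simp
  moreover have "- EP \<beta> hv M N f \<le> EP \<beta> hv M N (\<lambda>S. \<bar>f S\<bar>)"
  proof -
    have "- EP \<beta> hv M N f = EP \<beta> hv M N (\<lambda>S. (-1) * f S)" by (simp only: EP_scale)
    also have "\<dots> \<le> EP \<beta> hv M N (\<lambda>S. \<bar>f S\<bar>)" by (intro EP_mono) simp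
    finally show ?thesis .
  qed
  ultimately show ?thesis by simp
qed

lemma main_conv:
  assumes b: "\<beta> > 0" and hv: "\<And>\<mu>. \<mu> < M \<Longrightarrow> hyp \<beta> (hv \<mu>)"
  shows "(\<lambda>N. expected_logZ \<beta> lam hv M N / real N) \<longlonglongrightarrow> FW M \<beta> lam (Bc M (\<lambda>\<mu>. m0 \<beta> (hv \<mu>)))"
proof -
  let ?B = "Bc M (\<lambda>\<mu>. m0 \<beta> (hv \<mu>))"
  let ?T = "FW M \<beta> lam ?B"
  let ?K = "2 * \<beta> * real M + 2 * \<bar>lam\<bar>"
  define err where "err N = \<beta> * real M / (2 * real N) + real M * ln (2 * real N + 1) / real N" for N
  have Bv: "valid M ?B" using m0_abs hv by (intro Bc_valid) (auto intro: less_imp_le)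
  have pw: "\<bar>ln (Zpart N S \<beta> lam M) / real N - ?T\<bar> \<le> err N + ?K * (\<Sum>c\<in>spins M. \<bar>Ycol M N S c - ?B c\<bar>)"
    if N: "N \<ge> 1" and S: "S \<in> training_sets M N" for N S
  proof -
    have F: "(SUP p\<in>({..<M} \<rightarrow>\<^sub>E (UNIV::real set)). Gemp M N S \<beta> lam p) = FW M \<beta> lam (Ycol M N S)"
      unfolding FW_def using Gemp_GW[OF S N] by (intro arg_cong[where f=Sup] image_cong) auto
    note L = laplace[OF N b ts_pm1[OF S], of lam, unfolded F]
    have l1: "\<bar>ln (Zpart N S \<beta> lam M) / real N - FW M \<beta> lam (Ycol M N S)\<bar> \<le> err N"
    proof -
      have "\<beta> * real M / (2 * real N) \<ge> 0" using b by simp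
      moreover have "real M * ln (2 * real N + 1) / real N \<ge> 0" by simp
      ultimately show ?thesis using L(2,3) unfolding err_def by (simp add: abs_le_iff)
    qed
    have l2: "\<bar>FW M \<beta> lam (Ycol M N S) - ?T\<bar> \<le> ?K * (\<Sum>c\<in>spins M. \<bar>Ycol M N S c - ?B c\<bar>)"
      by (rule FW_lip_abs[OF Ycol_valid[OF S N] Bv b])
    show ?thesis using l1 l2 by linarith
  qed
  have bnd: "\<bar>expected_logZ \<beta> lam hv M N / real N - ?T\<bar>
      \<le> err N + ?K * (\<Sum>c\<in>spins M. EP \<beta> hv M N (\<lambda>S. \<bar>Ycol M N S c - ?B c\<bar>))" if N: "N \<ge> 1" for N
  proof -
    have "expected_logZ \<beta> lam hv M N / real N - ?T = EP \<beta> hv M N (\<lambda>S. 1 * (ln (Zpart N S \<beta> lam M) / real N) + 0 * 0 + (- ?T))"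
      by (simp only: EP_lin) (simp add: expected_logZ_def EP_def sum_divide_distrib)
    also have "\<dots> = EP \<beta> hv M N (\<lambda>S. ln (Zpart N S \<beta> lam M) / real N - ?T)" by simp
    finally have "\<bar>expected_logZ \<beta> lam hv M N / real N - ?T\<bar> \<le> EP \<beta> hv M N (\<lambda>S. \<bar>ln (Zpart N S \<beta> lam M) / real N - ?T\<bar>)"
      using EP_abs by metis
    also have "\<dots> \<le> EP \<beta> hv M N (\<lambda>S. ?K * (\<Sum>c\<in>spins M. \<bar>Ycol M N S c - ?B c\<bar>) + 0 * 0 + err N)"
      using pw[OF N] by (intro EP_mono) (simp add: add.commute)
    also have "\<dots> = ?K * EP \<beta> hv M N (\<lambda>S. \<Sum>c\<in>spins M. \<bar>Ycol M N S c - ?B c\<bar>) + err N"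
      by (simp only: EP_lin)
    also have "EP \<beta> hv M N (\<lambda>S. \<Sum>c\<in>spins M. \<bar>Ycol M N S c - ?B c\<bar>) = (\<Sum>c\<in>spins M. EP \<beta> hv M N (\<lambda>S. \<bar>Ycol M N S c - ?B c\<bar>))"
      by (rule EP_sum[OF finite_spins])
    finally show ?thesis by simp
  qed
  have err0: "err \<longlonglongrightarrow> 0"
  proof -
    have a: "(\<lambda>N. ln (2 * real N + 1) / real N) \<longlonglongrightarrow> 0" by real_asymp
    have "(\<lambda>N. (\<beta> * real M / 2) * (1 / real N) + real M * (ln (2 * real N + 1) / real N)) \<longlonglongrightarrow> (\<beta> * real M / 2) * 0 + real M * 0"
      by (intro tendsto_add tendsto_mult tendsto_const lim_inverse_n' a)
    then show ?thesis unfolding err_def by simp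
  qed
  have g0: "(\<lambda>N. err N + ?K * (\<Sum>c\<in>spins M. EP \<beta> hv M N (\<lambda>S. \<bar>Ycol M N S c - ?B c\<bar>))) \<longlonglongrightarrow> 0 + ?K * (\<Sum>c\<in>spins M. 0)"
    by (intro tendsto_add tendsto_mult tendsto_const tendsto_sum err0 EYabs_lim[OF hv]) auto
  have "(\<lambda>N. expected_logZ \<beta> lam hv M N / real N - ?T) \<longlonglongrightarrow> 0"
  proof (rule Lim_null_comparison[OF _ g0[simplified]])
    show "\<forall>\<^sub>F N in sequentially. norm (expected_logZ \<beta> lam hv M N / real N - ?T)
        \<le> err N + ?K * (\<Sum>c\<in>spins M. EP \<beta> hv M N (\<lambda>S. \<bar>Ycol M N S c - ?B c\<bar>))"
      using ev_N1 by (rule eventually_mono) (use bnd in simp)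
  qed
  then show ?thesis by (simp add: LIM_zero_iff)
qed

theorem theorem1:
  fixes M :: nat and \<beta> lam h :: real
  assumes "M \<ge> 1" and "\<beta> > 0"
    and "\<beta> \<le> 1 \<or> (\<beta> > 1 \<and> lam \<noteq> 0 \<and> h \<noteq> 0)"
  shows "\<forall>\<epsilon>\<in>spins M.
           (\<lambda>N. expected_logZ \<beta> lam (\<lambda>\<mu>. h * \<epsilon> \<mu>) M N / real N)
             \<longlonglongrightarrow> (SUP p\<in>({..<M} \<rightarrow>\<^sub>E (UNIV :: real set)). g_fun M p \<beta> lam h)"
proof
  fix \<epsilon> assume e: "\<epsilon> \<in> spins M"
  have hy: "hyp \<beta> h" using assms(2,3) unfolding hyp_def by auto
  have hv: "hyp \<beta> (h * \<epsilon> \<mu>)" if "\<mu> < M" for \<mu>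
    using spins_val[OF e that] hy hyp_neg[OF hy] by auto
  have a: "m0 \<beta> (h * \<epsilon> \<mu>) = \<epsilon> \<mu> * m0 \<beta> h" if "\<mu> < M" for \<mu>
    using spins_val[OF e that] m0_neg[OF hy] by auto
  have B: "Bc M (\<lambda>\<mu>. m0 \<beta> (h * \<epsilon> \<mu>)) = Bc M (\<lambda>\<mu>. \<epsilon> \<mu> * m0 \<beta> h)"
    unfolding Bc_def using a by (intro ext prod.cong refl) auto
  have T: "(SUP p\<in>({..<M} \<rightarrow>\<^sub>E (UNIV :: real set)). g_fun M p \<beta> lam h) = FW M \<beta> lam (iid_prob (m0 \<beta> h) M)"
    unfolding FW_def g_fun_GW ..
  have "(\<lambda>N. expected_logZ \<beta> lam (\<lambda>\<mu>. h * \<epsilon> \<mu>) M N / real N) \<longlonglongrightarrow> FW M \<beta> lam (Bc M (\<lambda>\<mu>. m0 \<beta> (h * \<epsilon> \<mu>)))"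
    using main_conv[OF assms(2), of M "\<lambda>\<mu>. h * \<epsilon> \<mu>" lam] hv by simp
  then show "(\<lambda>N. expected_logZ \<beta> lam (\<lambda>\<mu>. h * \<epsilon> \<mu>) M N / real N)
             \<longlonglongrightarrow> (SUP p\<in>({..<M} \<rightarrow>\<^sub>E (UNIV :: real set)). g_fun M p \<beta> lam h)"
    unfolding T B FW_flipv[OF e] .
qed

end
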